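(* Let $w\in\{0,1\}^n$ and $b\in\{0,1\}$. Let $F\vdash w$ and $F'\vdash wb$ be the closed forks built by the strategy $\mathcal{A}^*$ (on input $wb$, after processing $w$ and $wb$ respectively), so that $F\sqsubseteq F'$, and suppose in addition that $F$ is canonical. Then $F'$ is canonical.
   Context: Characteristic strings and forks. A characteristic string is $w=w_1\dots w_n\in\{0,1\}^n$; index $i$ is honest if $w_i=0$ and adversarial if $w_i=1$. A fork for $w$ is a rooted tree with edges directed away from the root $r$ and labeling $\ell:V\to\{0,\dots,n\}$ with (F1) $\ell(r)=0$; (F2) labels strictly increasing along directed paths; (F3) each honest index labels exactly one vertex; (F4) for honest $i<j$ the vertex labeled $i$ has strictly smaller depth than the vertex labeled $j$. Write $F\vdash w$. A vertex is honest if it is the root or labeled by an honest index; a tine is a directed path from the root, honest if its last vertex is honest; its length is its number of edges, $\ell(t)$ the label of its last vertex; $\mathrm{height}(F)$ is the maximal tine length. For tines $t_1,t_2$, $t_1\cap t_2$ is their longest common prefix. For $x$ a prefix of $w$, $F\vdash x$, $F'\vdash w$, $F\sqsubseteq F'$ means $F$ is a consistently labeled subgraph of $F'$. A fork is closed if every leaf is honest; a closed fork has a unique longest tine $\hat t$. Reach and relative margin. For closed $F\vdash w$ and tine $t$: $\mathrm{gap}(t)=\mathrm{length}(\hat t)-\mathrm{length}(t)$, $\mathrm{reserve}(t)=|\{i:w_i=1,\ i>\ell(t)\}|$, $\mathrm{reach}(t)=\mathrm{reserve}(t)-\mathrm{gap}(t)$; $\rho(F)=\max_t\mathrm{reach}(t)$,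 $\rho(w)=\max\{\rho(F):F\vdash w\text{ closed}\}$. For $w=xy$, tines are disjoint over $y$ if they share no edge terminating at a vertex with label $>|x|$ (a tine may be paired with itself). $\mu_x(F)=\max\min\{\mathrm{reach}(t_1),\mathrm{reach}(t_2)\}$ over pairs disjoint over $y$, and $\mu_x(y)=\max\{\mu_x(F):F\vdash xy\text{ closed}\}$. A pair $(t_\rho,t_x)$ of tines of $F\vdash xy$ witnesses $\mu_x(F)$ if they are disjoint over $y$, $\mathrm{reach}(t_\rho)=\rho(F)$ and $\mathrm{reach}(t_x)=\mu_x(F)$. Canonical forks. The trivial fork (single root vertex) is canonical for the empty string. For $n\ge1$, a fork $F_n$ for $w=w_1\dots w_n$ is canonical if it is closed, $F_{n-1}\sqsubseteq F_n$ for a canonical fork $F_{n-1}$ for $w_1\dots w_{n-1}$, $F_n$ contains an honest tine $\tau_\rho$ with $\mathrm{reach}(\tau_\rho)=\rho(F_n)=\rho(w)$, and for every decomposition $w=xy$ with $x$ a strict prefix of $w$, $F_n$ contains two honest tines $\tau_{\rho x},\tau_x$ such that $(\tau_{\rho x},\tau_x)$ witnesses $\mu_x(F_n)$ and $\mu_x(F_n)=\mu_x(y)$. Conservative extension. For closed $F\vdash w$ and a tine $s$ of $F$, a conservative extension of $s$ is a closed fork $F'\vdash w0$ with $F\sqsubseteq F'$ obtained by adding to $F$ a new honest tine $\sigma$ with $\ell(\sigma)=|w|+1$, $s$ a prefix of $\sigma$, and $\mathrm{length}(\sigma)=\mathrm{height}(F)+1$ (the new vertices between $s$ and the final vertex are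 labeled by adversarial indices). Strategy $\mathcal{A}^*$. Let $\le_\pi$ be the lexicographic order on tines, each represented by the list of its vertex labels from the root (ties broken arbitrarily but consistently). On input $w_1w_2\dots$, $F_0$ is the trivial fork. Given $F_n\vdash w_1\dots w_n$: if $w_{n+1}=1$, set $F_{n+1}=F_n$; if $w_{n+1}=0$, $F_{n+1}$ is a conservative extension of a tine $s\in F_n$ chosen as follows: if $F_n$ has no tine of reach $0$, $s$ is the unique longest tine of $F_n$; otherwise $s$ is the reach-zero tine that diverges earliest from the set of maximal-reach tines of $F_n$ (i.e., minimizes $\ell(s\cap r)$ over maximal-reach tines $r$), ties broken by smallest $\le_\pi$-rank. *)

theory Defs
  imports Main "HOL-Library.Sublist"
begin

(* Characteristic strings: bool lists, True = 1 (adversarial), False = 0 (honest).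
   Index i (1-based) refers to w ! (i - 1). *)

definition honest_idx :: "bool list \<Rightarrow> nat \<Rightarrow> bool" where
  "honest_idx w i \<longleftrightarrow> 1 \<le> i \<and> i \<le> length w \<and> \<not> w ! (i - 1)"

definition adv_idx :: "bool list \<Rightarrow> nat \<Rightarrow> bool" where
  "adv_idx w i \<longleftrightarrow> 1 \<le> i \<and> i \<le> length w \<and> w ! (i - 1)"

(* A labelled rooted tree: vertex set, root, parent map (the edge into a non-root
   vertex v is (par v, v)), and labelling. Vertices are natural numbers. *)
record fork =
  verts :: "nat set"
  root  :: nat
  par   :: "nat \<Rightarrow> nat"
  lab   :: "nat \<Rightarrow> nat"

definition is_tine :: "fork \<Rightarrow> nat list \<Rightarrow> bool" where
  "is_tine F t \<longleftrightarrow> t \<noteq> [] \<and> hd t = root F \<and> set t \<subseteq> verts F \<and>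
     (\<forall>i. Suc i < length t \<longrightarrow> t ! Suc i \<noteq> root F \<and> par F (t ! Suc i) = t ! i)"

definition tlen :: "nat list \<Rightarrow> nat" where
  "tlen t = length t - 1"

definition tlab :: "fork \<Rightarrow> nat list \<Rightarrow> nat" where
  "tlab F t = lab F (last t)"

definition is_fork :: "bool list \<Rightarrow> fork \<Rightarrow> bool" where
  "is_fork w F \<longleftrightarrow>
     finite (verts F) \<and> root F \<in> verts F \<and>
     (\<forall>v\<in>verts F. \<exists>t. is_tine F t \<and> last t = v) \<and>
     (\<forall>v\<in>verts F. lab F v \<le> length w) \<and>
     lab F (root F) = 0 \<and>
     (\<forall>t. is_tine F t \<longrightarrow> sorted_wrt (<) (map (lab F) t)) \<and>
     (\<forall>i. honest_idx w i \<longrightarrow> card {v\<in>verts F. lab F v = i} = 1) \<and>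
     (\<forall>t1 t2. is_tine F t1 \<longrightarrow> is_tine F t2 \<longrightarrow>
        honest_idx w (tlab F t1) \<longrightarrow> honest_idx w (tlab F t2) \<longrightarrow>
        tlab F t1 < tlab F t2 \<longrightarrow> tlen t1 < tlen t2)"

definition honest_vertex :: "bool list \<Rightarrow> fork \<Rightarrow> nat \<Rightarrow> bool" where
  "honest_vertex w F v \<longleftrightarrow> v = root F \<or> honest_idx w (lab F v)"

definition honest_tine :: "bool list \<Rightarrow> fork \<Rightarrow> nat list \<Rightarrow> bool" where
  "honest_tine w F t \<longleftrightarrow> is_tine F t \<and> honest_vertex w F (last t)"

definition height :: "fork \<Rightarrow> nat" where
  "height F = Max (tlen ` {t. is_tine F t})"

definition is_leaf :: "fork \<Rightarrow> nat \<Rightarrow> bool" where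
  "is_leaf F v \<longleftrightarrow> v \<in> verts F \<and> \<not> (\<exists>u\<in>verts F - {root F}. par F u = v)"

definition closed_fork :: "bool list \<Rightarrow> fork \<Rightarrow> bool" where
  "closed_fork w F \<longleftrightarrow> is_fork w F \<and> (\<forall>v. is_leaf F v \<longrightarrow> honest_vertex w F v)"

definition subfork :: "fork \<Rightarrow> fork \<Rightarrow> bool" where
  "subfork F F' \<longleftrightarrow> verts F \<subseteq> verts F' \<and> root F = root F' \<and>
     (\<forall>v\<in>verts F - {root F}. par F v = par F' v) \<and>
     (\<forall>v\<in>verts F. lab F v = lab F' v)"

definition trivial_fork :: "fork \<Rightarrow> bool" where
  "trivial_fork F \<longleftrightarrow> verts F = {root F} \<and> lab F (root F) = 0"

(* gap, reserve, reach; the unique longest tine of a closed fork has length height F *)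
definition gap :: "fork \<Rightarrow> nat list \<Rightarrow> int" where
  "gap F t = int (height F) - int (tlen t)"

definition reserve :: "bool list \<Rightarrow> fork \<Rightarrow> nat list \<Rightarrow> nat" where
  "reserve w F t = card {i. adv_idx w i \<and> tlab F t < i}"

definition reach :: "bool list \<Rightarrow> fork \<Rightarrow> nat list \<Rightarrow> int" where
  "reach w F t = int (reserve w F t) - gap F t"

definition rho :: "bool list \<Rightarrow> fork \<Rightarrow> int" where
  "rho w F = Max {reach w F t | t. is_tine F t}"

definition rho_str :: "bool list \<Rightarrow> int" where
  "rho_str w = Max {rho w F | F. closed_fork w F}"

definition tine_edges :: "nat list \<Rightarrow> (nat \<times> nat) set" where
  "tine_edges t = set (zip t (tl t))"

(* for w = x y with k = |x|: tines share no edge terminating at a vertex with label > k *)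
definition disjoint_over :: "fork \<Rightarrow> nat \<Rightarrow> nat list \<Rightarrow> nat list \<Rightarrow> bool" where
  "disjoint_over F k t1 t2 \<longleftrightarrow>
     (\<forall>e \<in> tine_edges t1 \<inter> tine_edges t2. lab F (snd e) \<le> k)"

definition mu :: "bool list \<Rightarrow> nat \<Rightarrow> fork \<Rightarrow> int" where
  "mu w k F = Max {min (reach w F t1) (reach w F t2) | t1 t2.
                   is_tine F t1 \<and> is_tine F t2 \<and> disjoint_over F k t1 t2}"

definition mu_str :: "bool list \<Rightarrow> nat \<Rightarrow> int" where
  "mu_str w k = Max {mu w k F | F. closed_fork w F}"

definition witnesses_mu :: "bool list \<Rightarrow> nat \<Rightarrow> fork \<Rightarrow> nat list \<Rightarrow> nat list \<Rightarrow> bool" where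
  "witnesses_mu w k F t1 t2 \<longleftrightarrow> is_tine F t1 \<and> is_tine F t2 \<and> disjoint_over F k t1 t2 \<and>
     reach w F t1 = rho w F \<and> reach w F t2 = mu w k F"

inductive canonical :: "bool list \<Rightarrow> fork \<Rightarrow> bool" where
  triv: "trivial_fork F \<Longrightarrow> canonical [] F"
| step: "canonical w G \<Longrightarrow> closed_fork (w @ [b]) F \<Longrightarrow> subfork G F \<Longrightarrow>
         (\<exists>t. honest_tine (w @ [b]) F t \<and> reach (w @ [b]) F t = rho (w @ [b]) F \<and>
              rho (w @ [b]) F = rho_str (w @ [b])) \<Longrightarrow>
         (\<forall>k < length (w @ [b]). \<exists>t1 t2.
              honest_tine (w @ [b]) F t1 \<and> honest_tine (w @ [b]) F t2 \<and>
              witnesses_mu (w @ [b]) k F t1 t2 \<and>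
              mu (w @ [b]) k F = mu_str (w @ [b]) k) \<Longrightarrow>
         canonical (w @ [b]) F"

definition cons_ext :: "bool list \<Rightarrow> fork \<Rightarrow> nat list \<Rightarrow> fork \<Rightarrow> bool" where
  "cons_ext w F s F' \<longleftrightarrow> closed_fork w F \<and> is_tine F s \<and>
     closed_fork (w @ [False]) F' \<and> subfork F F' \<and>
     (\<exists>new. new \<noteq> [] \<and> distinct new \<and> set new \<inter> verts F = {} \<and>
        verts F' = verts F \<union> set new \<and>
        is_tine F' (s @ new) \<and>
        lab F' (last new) = length w + 1 \<and>
        tlen (s @ new) = height F + 1 \<and>
        (\<forall>v \<in> set (butlast new). adv_idx (w @ [False]) (lab F' v)))"

definition lab_lex_le :: "fork \<Rightarrow> nat list \<Rightarrow> nat list \<Rightarrow> bool" where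
  "lab_lex_le F s t \<longleftrightarrow> map (lab F) s = map (lab F) t \<or>
     (map (lab F) s, map (lab F) t) \<in> lexord {(a, b). a < b}"

definition divg :: "bool list \<Rightarrow> fork \<Rightarrow> nat list \<Rightarrow> nat" where
  "divg w F s = Min {lab F (last (longest_common_prefix s r)) | r.
                       is_tine F r \<and> reach w F r = rho w F}"

definition astar_choice :: "bool list \<Rightarrow> fork \<Rightarrow> nat list \<Rightarrow> bool" where
  "astar_choice w F s \<longleftrightarrow> is_tine F s \<and>
     (if \<exists>t. is_tine F t \<and> reach w F t = 0
      then reach w F s = 0 \<and>
           (\<forall>t. is_tine F t \<and> reach w F t = 0 \<longrightarrow> divg w F s \<le> divg w F t) \<and>
           (\<forall>t. is_tine F t \<and> reach w F t = 0 \<and> divg w F t = divg w F s \<longrightarrow> lab_lex_le F s t)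
      else tlen s = height F)"

definition astar_step :: "bool list \<Rightarrow> bool \<Rightarrow> fork \<Rightarrow> fork \<Rightarrow> bool" where
  "astar_step w b F F' \<longleftrightarrow>
     (if b then F' = F else (\<exists>s. astar_choice w F s \<and> cons_ext w F s F'))"

(* forks reachable by running A* on a string (choices nondeterministic where the
   informal description leaves them open) *)
inductive astar_run :: "bool list \<Rightarrow> fork \<Rightarrow> bool" where
  init: "trivial_fork F \<Longrightarrow> astar_run [] F"
| step: "astar_run w F \<Longrightarrow> astar_step w b F F' \<Longrightarrow> astar_run (w @ [b]) F'"

end

theory Submission
  imports Defs
begin


lemma tine_ne: "is_tine F t \<Longrightarrow> t \<noteq> []" by (simp add: is_tine_def)
lemma tine_hd: "is_tine F t \<Longrightarrow> t ! 0 = root F"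
  unfolding is_tine_def by (metis hd_conv_nth)
lemma tine_set: "is_tine F t \<Longrightarrow> set t \<subseteq> verts F" by (simp add: is_tine_def)
lemma tine_nonroot: "is_tine F t \<Longrightarrow> 0 < i \<Longrightarrow> i < length t \<Longrightarrow> t ! i \<noteq> root F"
  unfolding is_tine_def by (metis Suc_pred)
lemma tine_par: "is_tine F t \<Longrightarrow> Suc i < length t \<Longrightarrow> par F (t ! Suc i) = t ! i"
  unfolding is_tine_def by blast

lemma tine_take: "is_tine F t \<Longrightarrow> 0 < j \<Longrightarrow> is_tine F (take j t)"
  unfolding is_tine_def
  apply (auto simp: hd_conv_nth dest: in_set_takeD)
  done

lemma tine_butlast: "is_tine F t \<Longrightarrow> 2 \<le> length t \<Longrightarrow>
   is_tine F (butlast t) \<and> last (butlast t) = par F (last t)"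
proof -
  assume a: "is_tine F t" "2 \<le> length t"
  have "butlast t = take (length t - 1) t" by (simp add: butlast_conv_take)
  then have 1: "is_tine F (butlast t)" using tine_take[OF a(1), of "length t - 1"] a(2) by simp
  have "par F (t ! Suc (length t - 2)) = t ! (length t - 2)"
    using tine_par[OF a(1), of "length t - 2"] a(2) by simp
  moreover have "Suc (length t - 2) = length t - 1" using a(2) by simp
  moreover have "t \<noteq> []" using a(2) by auto
  ultimately have "par F (last t) = t ! (length t - 2)"
    using a by (simp add: last_conv_nth)
  moreover have "last (butlast t) = t ! (length t - 2)"
  proof -
    have "butlast t \<noteq> []" using a(2) by (cases t) auto
    then show ?thesis using a(2) by (simp add: last_conv_nth nth_butlast numeral_2_eq_2)
  qed
  ultimately show ?thesis using 1 by simp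
qed

lemma tine_last_root: "is_tine F t \<Longrightarrow> last t = root F \<Longrightarrow> t = [root F]"
proof -
  assume a: "is_tine F t" "last t = root F"
  have "length t = 1"
  proof (rule ccontr)
    assume "length t \<noteq> 1"
    then have "1 < length t" using tine_ne[OF a(1)] by (cases t) auto
    then have "t ! (length t - 1) \<noteq> root F" using tine_nonroot[OF a(1)] by simp
    then show False using a tine_ne[OF a(1)] by (simp add: last_conv_nth)
  qed
  then show ?thesis using a by (cases t) auto
qed

lemma tine_len2: "is_tine F t \<Longrightarrow> t \<noteq> [root F] \<Longrightarrow> 2 \<le> length t"
  unfolding is_tine_def by (cases t) (auto, metis Suc_leI length_greater_0_conv list.collapse list.size(4) neq_Nil_conv one_add_one)

lemma tine_unique: "is_tine F a \<Longrightarrow> is_tine F b \<Longrightarrow> last a = last b \<Longrightarrow> a = b"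
proof (induction "length a" arbitrary: a b rule: less_induct)
  case less
  show ?case
  proof (cases "last a = root F")
    case True
    then show ?thesis using tine_last_root less.prems by metis
  next
    case False
    then have "a \<noteq> [root F]" "b \<noteq> [root F]" using less.prems by auto
    then have la: "2 \<le> length a" and lb: "2 \<le> length b"
      using less.prems tine_len2 by auto
    have "butlast a = butlast b"
      using less.hyps[of "butlast a" "butlast b"] tine_butlast[OF less.prems(1) la]
        tine_butlast[OF less.prems(2) lb] less.prems(3) la by simp
    then show ?thesis using less.prems(3) tine_ne less.prems
      by (metis append_butlast_last_id)
  qed
qed

lemma fork_sorted: "is_fork w F \<Longrightarrow> is_tine F t \<Longrightarrow> sorted_wrt (<) (map (lab F) t)"
  by (simp add: is_fork_def)

lemma lab_mono: "is_fork w F \<Longrightarrow> is_tine F t \<Longrightarrow> i < j \<Longrightarrow> j < length t \<Longrightarrow>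
   lab F (t ! i) < lab F (t ! j)"
  using sorted_wrt_nth_less[OF fork_sorted, of w F t i j] by simp

lemma lab_mono_le: "is_fork w F \<Longrightarrow> is_tine F t \<Longrightarrow> i \<le> j \<Longrightarrow> j < length t \<Longrightarrow>
   lab F (t ! i) \<le> lab F (t ! j)"
  using lab_mono[of w F t i j] by (cases "i = j") auto

lemma lab_ge_idx: "is_fork w F \<Longrightarrow> is_tine F t \<Longrightarrow> i < length t \<Longrightarrow> i \<le> lab F (t ! i)"
proof (induction i)
  case 0 then show ?case by simp
next
  case (Suc i)
  then have "lab F (t ! i) < lab F (t ! Suc i)" using lab_mono by auto
  then show ?case using Suc by simp
qed

lemma tlen_le_tlab: "is_fork w F \<Longrightarrow> is_tine F t \<Longrightarrow> tlen t \<le> tlab F t"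
  using lab_ge_idx[of w F t "length t - 1"] tine_ne[of F t]
  by (simp add: tlen_def tlab_def last_conv_nth)

lemma tlab_le_len: "is_fork w F \<Longrightarrow> is_tine F t \<Longrightarrow> tlab F t \<le> length w"
  unfolding is_fork_def tlab_def using tine_set tine_ne by (metis last_in_set subsetD)

lemma lab_root: "is_fork w F \<Longrightarrow> lab F (root F) = 0" by (simp add: is_fork_def)

lemma lab_nonroot: "is_fork w F \<Longrightarrow> is_tine F t \<Longrightarrow> v \<in> set t \<Longrightarrow> v \<noteq> root F \<Longrightarrow> 0 < lab F v"
proof -
  assume a: "is_fork w F" "is_tine F t" "v \<in> set t" "v \<noteq> root F"
  then obtain i where i: "i < length t" "t ! i = v" by (meson in_set_conv_nth)
  then have "i \<noteq> 0" using a tine_hd by metis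
  then show ?thesis using lab_mono[OF a(1,2), of 0 i] i tine_hd[OF a(2)] lab_root[OF a(1)] by simp
qed

lemma tine_distinct: "is_fork w F \<Longrightarrow> is_tine F t \<Longrightarrow> distinct t"
proof -
  assume "is_fork w F" "is_tine F t"
  then have "sorted_wrt (<) (map (lab F) t)" by (rule fork_sorted)
  then have "distinct (map (lab F) t)" by (simp add: strict_sorted_iff)
  then show ?thesis by (simp add: distinct_map)
qed

lemma finite_tines: "is_fork w F \<Longrightarrow> finite {t. is_tine F t}"
proof -
  assume a: "is_fork w F"
  have "{t. is_tine F t} \<subseteq> {t. set t \<subseteq> verts F \<and> length t \<le> card (verts F)}"
  proof
    fix t assume "t \<in> {t. is_tine F t}"
    then have t: "is_tine F t" by simp
    then have "length t = card (set t)" using tine_distinct[OF a] distinct_card by metis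
    also have "\<dots> \<le> card (verts F)" using a t tine_set by (simp add: card_mono is_fork_def)
    finally show "t \<in> {t. set t \<subseteq> verts F \<and> length t \<le> card (verts F)}" using t tine_set by auto
  qed
  moreover have "finite {t. set t \<subseteq> verts F \<and> length t \<le> card (verts F)}"
    using a by (simp add: finite_lists_length_le is_fork_def)
  ultimately show ?thesis by (rule finite_subset)
qed

lemma root_tine: "is_fork w F \<Longrightarrow> is_tine F [root F]"
  by (simp add: is_tine_def is_fork_def)

lemma height_ge: "is_fork w F \<Longrightarrow> is_tine F t \<Longrightarrow> tlen t \<le> height F"
  unfolding height_def using finite_tines by (simp add: Max_ge)

lemma height_ex: "is_fork w F \<Longrightarrow> \<exists>t. is_tine F t \<and> tlen t = height F"
proof -
  assume a: "is_fork w F"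
  have "height F \<in> tlen ` {t. is_tine F t}" unfolding height_def
    using finite_tines[OF a] root_tine[OF a] by (intro Max_in) auto
  then show ?thesis by auto
qed

lemma height_le: "is_fork w F \<Longrightarrow> height F \<le> length w"
  using height_ex tlen_le_tlab tlab_le_len by (metis le_trans)

lemma tine_edge: "is_tine F t \<Longrightarrow> v \<in> set t \<Longrightarrow> v \<noteq> root F \<Longrightarrow> (par F v, v) \<in> tine_edges t"
proof -
  assume a: "is_tine F t" "v \<in> set t" "v \<noteq> root F"
  then obtain i where i: "i < length t" "t ! i = v" by (meson in_set_conv_nth)
  then have "i \<noteq> 0" using a tine_hd by metis
  then obtain j where j: "i = Suc j" by (cases i) auto
  have "par F v = t ! j" using tine_par[OF a(1), of j] i j by simp
  moreover have e: "zip t (tl t) ! j = (t ! j, t ! i)" using i j by (simp add: nth_tl)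
  moreover have jl: "j < length (zip t (tl t))" using i j by simp
  ultimately show ?thesis unfolding tine_edges_def using i nth_mem[OF jl] by simp
qed

lemma edges_snd: "e \<in> tine_edges t \<Longrightarrow> snd e \<in> set t"
  unfolding tine_edges_def by (metis list.set_sel(2) tl_Nil empty_iff empty_set prod.collapse set_zip_rightD)


lemma disj_vert: "is_fork w F \<Longrightarrow> is_tine F a \<Longrightarrow> is_tine F b \<Longrightarrow>
   disjoint_over F k a b \<longleftrightarrow> (\<forall>v \<in> set a \<inter> set b. lab F v \<le> k)"
proof
  assume a: "is_fork w F" "is_tine F a" "is_tine F b" "disjoint_over F k a b"
  show "\<forall>v \<in> set a \<inter> set b. lab F v \<le> k"
  proof
    fix v assume v: "v \<in> set a \<inter> set b"
    show "lab F v \<le> k"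
    proof (cases "v = root F")
      case True then show ?thesis using lab_root[OF a(1)] by simp
    next
      case False
      then have "(par F v, v) \<in> tine_edges a \<inter> tine_edges b" using tine_edge a v by auto
      then have "lab F (snd (par F v, v)) \<le> k" using a(4) unfolding disjoint_over_def by blast
      then show ?thesis by simp
    qed
  qed
next
  assume "\<forall>v \<in> set a \<inter> set b. lab F v \<le> k"
  then show "disjoint_over F k a b" unfolding disjoint_over_def using edges_snd by blast
qed

lemma disj_weak: "(\<forall>v \<in> set a \<inter> set b. lab F v \<le> k) \<Longrightarrow> disjoint_over F k a b"
  unfolding disjoint_over_def using edges_snd by blast

lemma disj_sym: "disjoint_over F k a b \<longleftrightarrow> disjoint_over F k b a"
  unfolding disjoint_over_def by blast

lemma tine_prefix_at: "is_tine F t \<Longrightarrow> i < length t \<Longrightarrow>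
   is_tine F (take (Suc i) t) \<and> last (take (Suc i) t) = t ! i"
  using tine_take[of F t "Suc i"] by (simp add: take_Suc_conv_app_nth)

lemma anc: "is_fork w F \<Longrightarrow> is_tine F a \<Longrightarrow> is_tine F b \<Longrightarrow> v \<in> set a \<Longrightarrow> v \<in> set b \<Longrightarrow>
   u \<in> set a \<Longrightarrow> lab F u \<le> lab F v \<Longrightarrow> u \<in> set b"
proof -
  assume a: "is_fork w F" "is_tine F a" "is_tine F b" "v \<in> set a" "v \<in> set b" "u \<in> set a"
    "lab F u \<le> lab F v"
  obtain i where i: "i < length a" "a ! i = v" using a(4) by (meson in_set_conv_nth)
  obtain i' where i': "i' < length b" "b ! i' = v" using a(5) by (meson in_set_conv_nth)
  obtain j where j: "j < length a" "a ! j = u" using a(6) by (meson in_set_conv_nth)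
  have "j \<le> i"
  proof (rule ccontr)
    assume "\<not> j \<le> i"
    then have "lab F v < lab F u" using lab_mono[OF a(1,2), of i j] i j by simp
    then show False using a(7) by simp
  qed
  have "take (Suc i) a = take (Suc i') b"
    using tine_prefix_at[OF a(2) i(1)] tine_prefix_at[OF a(3) i'(1)] i i' tine_unique by metis
  moreover have "u \<in> set (take (Suc i) a)"
  proof -
    have jl: "j < length (take (Suc i) a)" using j \<open>j \<le> i\<close> by simp
    have "take (Suc i) a ! j = u" using j \<open>j \<le> i\<close> by simp
    then show ?thesis using nth_mem[OF jl] by simp
  qed
  ultimately show ?thesis by (metis in_set_takeD)
qed

lemma ultra: "is_fork w F \<Longrightarrow> is_tine F s \<Longrightarrow> is_tine F t1 \<Longrightarrow> is_tine F t2 \<Longrightarrow>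
   (\<forall>v \<in> set t1 \<inter> set t2. lab F v \<le> k) \<Longrightarrow>
   (\<forall>v \<in> set s \<inter> set t1. lab F v \<le> k) \<or> (\<forall>v \<in> set s \<inter> set t2. lab F v \<le> k)"
proof (rule ccontr)
  assume a: "is_fork w F" "is_tine F s" "is_tine F t1" "is_tine F t2"
    "\<forall>v \<in> set t1 \<inter> set t2. lab F v \<le> k"
    "\<not> ((\<forall>v \<in> set s \<inter> set t1. lab F v \<le> k) \<or> (\<forall>v \<in> set s \<inter> set t2. lab F v \<le> k))"
  then obtain v1 v2 where v: "v1 \<in> set s" "v1 \<in> set t1" "k < lab F v1"
     "v2 \<in> set s" "v2 \<in> set t2" "k < lab F v2" by auto
  show False
  proof (cases "lab F v1 \<le> lab F v2")
    case True
    then have "v1 \<in> set t2" using anc[OF a(1,2,4) v(4,5,1)] by simp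
    then have "lab F v1 \<le> k" using a(5) v(2) by blast
    then show ?thesis using v(3) by simp
  next
    case False
    then have "v2 \<in> set t1" using anc[OF a(1,2,3) v(1,2,4)] by simp
    then have "lab F v2 \<le> k" using a(5) v(5) by blast
    then show ?thesis using v(6) by simp
  qed
qed


lemma lcp_ne: "is_tine F a \<Longrightarrow> is_tine F b \<Longrightarrow> longest_common_prefix a b \<noteq> []"
proof -
  assume "is_tine F a" "is_tine F b"
  then obtain xs ys where "a = root F # xs" "b = root F # ys"
    unfolding is_tine_def by (metis list.collapse)
  then show ?thesis by simp
qed

lemma lcp_vert: "is_fork w F \<Longrightarrow> is_tine F a \<Longrightarrow> is_tine F b \<Longrightarrow>
   (\<forall>v \<in> set a \<inter> set b. lab F v \<le> k) \<longleftrightarrow> lab F (last (longest_common_prefix a b)) \<le> k"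
proof
  assume a: "is_fork w F" "is_tine F a" "is_tine F b" "\<forall>v \<in> set a \<inter> set b. lab F v \<le> k"
  have "last (longest_common_prefix a b) \<in> set (longest_common_prefix a b)"
    using lcp_ne[OF a(2,3)] by simp
  then have "last (longest_common_prefix a b) \<in> set a \<inter> set b"
    using set_mono_prefix[OF longest_common_prefix_prefix1[of a b]]
      set_mono_prefix[OF longest_common_prefix_prefix2[of a b]] by blast
  then show "lab F (last (longest_common_prefix a b)) \<le> k" using a(4) by blast
next
  assume a: "is_fork w F" "is_tine F a" "is_tine F b" "lab F (last (longest_common_prefix a b)) \<le> k"
  show "\<forall>v \<in> set a \<inter> set b. lab F v \<le> k"
  proof
    fix v assume v: "v \<in> set a \<inter> set b"
    obtain i where i: "i < length a" "a ! i = v" using v by (meson IntD1 in_set_conv_nth)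
    obtain i' where i': "i' < length b" "b ! i' = v" using v by (meson IntD2 in_set_conv_nth)
    have eq: "take (Suc i) a = take (Suc i') b"
      using tine_prefix_at[OF a(2) i(1)] tine_prefix_at[OF a(3) i'(1)] i i' tine_unique by metis
    define l where "l = longest_common_prefix a b"
    have "prefix (take (Suc i) a) l" unfolding l_def
      using longest_common_prefix_max_prefix[OF take_is_prefix[of "Suc i" a]] eq take_is_prefix[of "Suc i'" b]
      by simp
    then have "length (take (Suc i) a) \<le> length l" by (rule prefix_length_le)
    then have il: "Suc i \<le> length l" using i by simp
    have pa: "prefix l a" unfolding l_def by (rule longest_common_prefix_prefix1)
    then obtain zs where zs: "a = l @ zs" by (auto simp: prefix_def)
    have ll: "length l \<le> length a" using zs by simp
    have lne: "l \<noteq> []" using il by auto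
    have "last l = a ! (length l - 1)" using zs il lne by (simp add: last_conv_nth nth_append)
    moreover have "lab F (a ! i) \<le> lab F (a ! (length l - 1))"
      using lab_mono_le[OF a(1,2), of i "length l - 1"] il ll by simp
    ultimately show "lab F v \<le> k" using a(4) i l_def by simp
  qed
qed


definition rstep :: "int \<Rightarrow> bool \<Rightarrow> int" where
  "rstep r c = (if c then r + 1 else if 0 < r then r - 1 else 0)"
definition mstep :: "int \<Rightarrow> int \<Rightarrow> bool \<Rightarrow> int" where
  "mstep r m c = (if c then m + 1 else if m < r \<and> m = 0 then 0 else m - 1)"
definition rhoR :: "bool list \<Rightarrow> int" where
  "rhoR w = foldl rstep 0 w"
definition pstep :: "int \<times> int \<Rightarrow> bool \<Rightarrow> int \<times> int" where
  "pstep p c = (rstep (fst p) c, mstep (fst p) (snd p) c)"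
definition muR :: "bool list \<Rightarrow> nat \<Rightarrow> int" where
  "muR w k = snd (foldl pstep (rhoR (take k w), rhoR (take k w)) (drop k w))"

lemma rhoR_Nil[simp]: "rhoR [] = 0" by (simp add: rhoR_def)
lemma rhoR_snoc: "rhoR (w @ [c]) = rstep (rhoR w) c" by (simp add: rhoR_def)
lemma rhoR_nonneg: "0 \<le> rhoR w"
  by (induction w rule: rev_induct) (auto simp: rhoR_snoc rstep_def)

lemma fst_fold: "fst (foldl pstep (rhoR x, m) y) = rhoR (x @ y)"
proof (induction y arbitrary: x m)
  case Nil then show ?case by simp
next
  case (Cons c y)
  have "foldl pstep (rhoR x, m) (c # y) = foldl pstep (rhoR (x @ [c]), mstep (rhoR x) m c) y"
    by (simp add: pstep_def rhoR_snoc)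
  then show ?case using Cons.IH[of "x @ [c]"] by simp
qed

lemma muR_snoc: "k \<le> length w \<Longrightarrow> muR (w @ [c]) k = mstep (rhoR w) (muR w k) c"
proof -
  assume k: "k \<le> length w"
  have "drop k (w @ [c]) = drop k w @ [c]" using k by simp
  moreover have "take k (w @ [c]) = take k w" using k by simp
  ultimately have "muR (w @ [c]) k = snd (pstep (foldl pstep (rhoR (take k w), rhoR (take k w)) (drop k w)) c)"
    by (simp add: muR_def)
  also have "\<dots> = mstep (rhoR w) (muR w k) c"
    using fst_fold[of "take k w" "rhoR (take k w)" "drop k w"] by (simp add: pstep_def muR_def)
  finally show ?thesis .
qed

lemma muR_len: "muR w (length w) = rhoR w" by (simp add: muR_def)

lemma muR_le: "k \<le> length w \<Longrightarrow> muR w k \<le> rhoR w"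
proof (induction w rule: rev_induct)
  case Nil then show ?case by (simp add: muR_def)
next
  case (snoc c w)
  show ?case
  proof (cases "k = length (w @ [c])")
    case True then show ?thesis using muR_len[of "w @ [c]"] by simp
  next
    case False
    then have k: "k \<le> length w" using snoc.prems by simp
    then have "muR w k \<le> rhoR w" using snoc.IH by simp
    then show ?thesis using muR_snoc[OF k] rhoR_snoc[of w c] rhoR_nonneg[of w]
      by (auto simp: mstep_def rstep_def)
  qed
qed

definition Am :: "bool list \<Rightarrow> nat \<Rightarrow> nat \<Rightarrow> nat" where
  "Am w m l = card {i. adv_idx w i \<and> l < i \<and> i \<le> m}"
definition HS :: "bool list \<Rightarrow> fork \<Rightarrow> nat \<Rightarrow> nat list set" where
  "HS w F m = {t. is_tine F t \<and> honest_idx w (tlab F t) \<and> tlab F t \<le> m}"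
definition Dm :: "bool list \<Rightarrow> fork \<Rightarrow> nat \<Rightarrow> nat" where
  "Dm w F m = Max (insert 0 (tlen ` HS w F m))"
definition rs :: "bool list \<Rightarrow> fork \<Rightarrow> nat \<Rightarrow> nat list \<Rightarrow> int" where
  "rs w F m t = int (Am w m (tlab F t)) - int (Dm w F m) + int (tlen t)"

lemma HS_fin: "is_fork w F \<Longrightarrow> finite (HS w F m)"
  using finite_tines by (rule finite_subset[rotated]) (auto simp: HS_def)

lemma Dm_ge: "is_fork w F \<Longrightarrow> t \<in> HS w F m \<Longrightarrow> tlen t \<le> Dm w F m"
  unfolding Dm_def using HS_fin by (simp add: Max_ge)

lemma Dm_cases: "is_fork w F \<Longrightarrow> Dm w F m = 0 \<or> (\<exists>t \<in> HS w F m. Dm w F m = tlen t)"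
proof -
  assume a: "is_fork w F"
  have "Dm w F m \<in> insert 0 (tlen ` HS w F m)" unfolding Dm_def using HS_fin[OF a] by (intro Max_in) auto
  then show ?thesis by auto
qed

lemma Dm_le_height: "is_fork w F \<Longrightarrow> Dm w F m \<le> height F"
  using Dm_cases[of w F m] height_ge by (auto simp: HS_def)

lemma Am_fin: "finite {i. adv_idx w i \<and> l < i \<and> i \<le> m}" by (rule finite_subset[of _ "{..m}"]) auto

lemma adv_Suc: "m < length w \<Longrightarrow> adv_idx w (Suc m) = w ! m" by (simp add: adv_idx_def)
lemma hon_Suc: "m < length w \<Longrightarrow> honest_idx w (Suc m) = (\<not> w ! m)" by (simp add: honest_idx_def)

lemma Am_Suc: "m < length w \<Longrightarrow> Am w (Suc m) l = Am w m l + (if w ! m \<and> l < Suc m then 1 else 0)"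
proof -
  assume m: "m < length w"
  show ?thesis
  proof (cases "w ! m \<and> l < Suc m")
    case True
    then have "{i. adv_idx w i \<and> l < i \<and> i \<le> Suc m} = insert (Suc m) {i. adv_idx w i \<and> l < i \<and> i \<le> m}"
      using adv_Suc[OF m] by (auto simp: le_Suc_eq)
    then show ?thesis using True Am_fin unfolding Am_def by simp
  next
    case False
    then have "{i. adv_idx w i \<and> l < i \<and> i \<le> Suc m} = {i. adv_idx w i \<and> l < i \<and> i \<le> m}"
      using adv_Suc[OF m] by (auto simp: le_Suc_eq)
    then show ?thesis using False unfolding Am_def by simp
  qed
qed

lemma Am_zero: "m \<le> l \<Longrightarrow> Am w m l = 0" unfolding Am_def by auto

lemma F4: "is_fork w F \<Longrightarrow> is_tine F t1 \<Longrightarrow> is_tine F t2 \<Longrightarrow> honest_idx w (tlab F t1) \<Longrightarrow>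
  honest_idx w (tlab F t2) \<Longrightarrow> tlab F t1 < tlab F t2 \<Longrightarrow> tlen t1 < tlen t2"
  unfolding is_fork_def by blast

lemma hon_unique: "is_fork w F \<Longrightarrow> honest_idx w i \<Longrightarrow> is_tine F t1 \<Longrightarrow> is_tine F t2 \<Longrightarrow>
  tlab F t1 = i \<Longrightarrow> tlab F t2 = i \<Longrightarrow> t1 = t2"
proof -
  assume a: "is_fork w F" "honest_idx w i" "is_tine F t1" "is_tine F t2" "tlab F t1 = i" "tlab F t2 = i"
  have "card {v\<in>verts F. lab F v = i} = 1" using a unfolding is_fork_def by blast
  then obtain x where x: "{v\<in>verts F. lab F v = i} = {x}" by (meson card_1_singletonE)
  have "last t1 \<in> {v\<in>verts F. lab F v = i}" using a tine_set tine_ne last_in_set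
    by (fastforce simp: tlab_def)
  moreover have "last t2 \<in> {v\<in>verts F. lab F v = i}" using a tine_set tine_ne last_in_set
    by (fastforce simp: tlab_def)
  ultimately have "last t1 = last t2" using x by auto
  then show ?thesis using tine_unique a by metis
qed

lemma hon_exists: "is_fork w F \<Longrightarrow> honest_idx w i \<Longrightarrow> \<exists>t. is_tine F t \<and> tlab F t = i"
proof -
  assume a: "is_fork w F" "honest_idx w i"
  have "card {v\<in>verts F. lab F v = i} = 1" using a unfolding is_fork_def by blast
  then obtain x where x: "{v\<in>verts F. lab F v = i} = {x}" by (meson card_1_singletonE)
  then have "x \<in> verts F" "lab F x = i" by auto
  moreover obtain t where "is_tine F t" "last t = x" using a(1) \<open>x \<in> verts F\<close> unfolding is_fork_def by blast
  ultimately show ?thesis by (auto simp: tlab_def)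
qed

lemma zip_tl_append: "set (zip xs (tl xs)) \<subseteq> set (zip (xs @ ys) (tl (xs @ ys)))"
proof (induction xs)
  case Nil then show ?case by simp
next
  case (Cons x xs)
  then show ?case by (cases xs) auto
qed

lemma ext_lem: "is_fork w F \<Longrightarrow> is_tine F t \<Longrightarrow> tlab F t = Suc m \<Longrightarrow>
  is_tine F (butlast t) \<and> tlab F (butlast t) \<le> m \<and> tlen (butlast t) + 1 = tlen t \<and>
  tine_edges (butlast t) \<subseteq> tine_edges t"
proof -
  assume a: "is_fork w F" "is_tine F t" "tlab F t = Suc m"
  have "t \<noteq> [root F]" using a lab_root[OF a(1)] by (auto simp: tlab_def)
  then have l2: "2 \<le> length t" using tine_len2 a(2) by blast
  have bt: "is_tine F (butlast t)" "last (butlast t) = par F (last t)" using tine_butlast[OF a(2) l2] by auto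
  have "lab F (t ! (length t - 2)) < lab F (t ! (length t - 1))" using lab_mono[OF a(1,2)] l2 by simp
  moreover have "last (butlast t) = t ! (length t - 2)"
  proof -
    have "butlast t \<noteq> []" using l2 by (cases t) auto
    then show ?thesis using l2 by (simp add: last_conv_nth nth_butlast numeral_2_eq_2)
  qed
  moreover have "last t = t ! (length t - 1)" using l2 by (cases t) (auto simp: last_conv_nth)
  ultimately have "tlab F (butlast t) \<le> m" using a(3) by (simp add: tlab_def)
  moreover have "tlen (butlast t) + 1 = tlen t" using l2 by (simp add: tlen_def)
  moreover have "tine_edges (butlast t) \<subseteq> tine_edges t"
    unfolding tine_edges_def using zip_tl_append[of "butlast t" "[last t]"] l2
    by (metis append_butlast_last_id list.size(3) not_numeral_le_zero)
  ultimately show ?thesis using bt by simp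
qed

lemma disj_mono: "disjoint_over F k a b \<Longrightarrow> tine_edges a' \<subseteq> tine_edges a \<Longrightarrow> tine_edges b' \<subseteq> tine_edges b \<Longrightarrow>
   disjoint_over F k a' b'"
  unfolding disjoint_over_def by blast

definition UB :: "bool list \<Rightarrow> fork \<Rightarrow> nat \<Rightarrow> bool" where
  "UB w F m \<longleftrightarrow> (\<forall>t. is_tine F t \<and> tlab F t \<le> m \<longrightarrow> rs w F m t \<le> rhoR (take m w)) \<and>
     (\<forall>k \<le> m. \<forall>t1 t2. is_tine F t1 \<and> is_tine F t2 \<and> tlab F t1 \<le> m \<and> tlab F t2 \<le> m \<and>
        disjoint_over F k t1 t2 \<longrightarrow> min (rs w F m t1) (rs w F m t2) \<le> muR (take m w) k)"

lemma UB_0: "is_fork w F \<Longrightarrow> UB w F 0"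
proof -
  assume a: "is_fork w F"
  have r: "rs w F 0 t \<le> 0" if "is_tine F t" "tlab F t \<le> 0" for t
  proof -
    have "tlen t = 0" using tlen_le_tlab[OF a that(1)] that(2) by simp
    then show ?thesis by (simp add: rs_def Am_zero)
  qed
  show ?thesis unfolding UB_def
  proof (intro conjI allI impI)
    fix t assume "is_tine F t \<and> tlab F t \<le> 0"
    then show "rs w F 0 t \<le> rhoR (take 0 w)" using r by simp
  next
    fix k t1 t2 assume "k \<le> 0" and h: "is_tine F t1 \<and> is_tine F t2 \<and> tlab F t1 \<le> 0 \<and> tlab F t2 \<le> 0 \<and>
        disjoint_over F k t1 t2"
    then have "min (rs w F 0 t1) (rs w F 0 t2) \<le> 0" using r by fastforce
    then show "min (rs w F 0 t1) (rs w F 0 t2) \<le> muR (take 0 w) k" using \<open>k \<le> 0\<close> by (simp add: muR_def)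
  qed
qed

lemma take_Suc_w: "m < length w \<Longrightarrow> take (Suc m) w = take m w @ [w ! m]"
  by (simp add: take_Suc_conv_app_nth)

lemma UB_top: "m < length w \<Longrightarrow> muR (take (Suc m) w) (Suc m) = rhoR (take (Suc m) w)"
  using muR_len[of "take (Suc m) w"] by simp

lemma UB_adv: "is_fork w F \<Longrightarrow> m < length w \<Longrightarrow> w ! m \<Longrightarrow> UB w F m \<Longrightarrow> UB w F (Suc m)"
proof -
  assume a: "is_fork w F" "m < length w" "w ! m" "UB w F m"
  have HSeq: "HS w F (Suc m) = HS w F m"
    using hon_Suc[OF a(2)] a(3) by (auto simp: HS_def le_Suc_eq)
  then have Deq: "Dm w F (Suc m) = Dm w F m" by (simp add: Dm_def)
  define g where "g t = (if tlab F t = Suc m then butlast t else t)" for t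
  have gp: "is_tine F (g t) \<and> tlab F (g t) \<le> m \<and> tine_edges (g t) \<subseteq> tine_edges t \<and>
     rs w F (Suc m) t \<le> rs w F m (g t) + 1" if "is_tine F t" "tlab F t \<le> Suc m" for t
  proof (cases "tlab F t = Suc m")
    case True
    then have e: "is_tine F (butlast t) \<and> tlab F (butlast t) \<le> m \<and> tlen (butlast t) + 1 = tlen t \<and>
       tine_edges (butlast t) \<subseteq> tine_edges t" using ext_lem[OF a(1) that(1)] by simp
    have "rs w F (Suc m) t = - int (Dm w F m) + int (tlen t)" using True Deq by (simp add: rs_def Am_zero)
    also have "\<dots> \<le> rs w F m (butlast t) + 1" using e by (simp add: rs_def)
    finally show ?thesis using e True g_def by simp
  next
    case False
    then have "tlab F t \<le> m" using that by simp
    then show ?thesis using that False Deq a(3) by (simp add: g_def rs_def Am_Suc[OF a(2)])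
  qed
  have IH1: "\<And>t. is_tine F t \<Longrightarrow> tlab F t \<le> m \<Longrightarrow> rs w F m t \<le> rhoR (take m w)"
    using a(4) unfolding UB_def by blast
  have IH2: "\<And>k t1 t2. k \<le> m \<Longrightarrow> is_tine F t1 \<Longrightarrow> is_tine F t2 \<Longrightarrow> tlab F t1 \<le> m \<Longrightarrow> tlab F t2 \<le> m \<Longrightarrow>
        disjoint_over F k t1 t2 \<Longrightarrow> min (rs w F m t1) (rs w F m t2) \<le> muR (take m w) k"
    using a(4) unfolding UB_def by blast
  have rr: "rhoR (take (Suc m) w) = rhoR (take m w) + 1"
    using take_Suc_w[OF a(2)] a(3) by (simp add: rhoR_snoc rstep_def)
  have P1: "rs w F (Suc m) t \<le> rhoR (take (Suc m) w)" if "is_tine F t" "tlab F t \<le> Suc m" for t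
    using gp[OF that] IH1[of "g t"] rr by simp
  show ?thesis unfolding UB_def
  proof (intro conjI allI impI)
    fix t assume "is_tine F t \<and> tlab F t \<le> Suc m"
    then show "rs w F (Suc m) t \<le> rhoR (take (Suc m) w)" using P1 by simp
  next
    fix k t1 t2 assume k: "k \<le> Suc m" and h: "is_tine F t1 \<and> is_tine F t2 \<and> tlab F t1 \<le> Suc m \<and>
       tlab F t2 \<le> Suc m \<and> disjoint_over F k t1 t2"
    show "min (rs w F (Suc m) t1) (rs w F (Suc m) t2) \<le> muR (take (Suc m) w) k"
    proof (cases "k = Suc m")
      case True
      then show ?thesis using P1[of t1] h UB_top[OF a(2)] by simp
    next
      case False
      then have k': "k \<le> m" using k by simp
      have "disjoint_over F k (g t1) (g t2)" using h gp[of t1] gp[of t2] disj_mono by blast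
      then have "min (rs w F m (g t1)) (rs w F m (g t2)) \<le> muR (take m w) k"
        using IH2[OF k'] h gp[of t1] gp[of t2] by blast
      moreover have "muR (take (Suc m) w) k = muR (take m w) k + 1"
        using take_Suc_w[OF a(2)] a(3) muR_snoc[of k "take m w" "w ! m"] k' a(2)
        by (simp add: mstep_def)
      ultimately show ?thesis using h gp[of t1] gp[of t2] by linarith
    qed
  qed
qed

lemma UB_hon: "is_fork w F \<Longrightarrow> m < length w \<Longrightarrow> \<not> w ! m \<Longrightarrow> UB w F m \<Longrightarrow> UB w F (Suc m)"
proof -
  assume a: "is_fork w F" "m < length w" "\<not> w ! m" "UB w F m"
  have hS: "honest_idx w (Suc m)" using hon_Suc[OF a(2)] a(3) by simp
  obtain th where th: "is_tine F th" "tlab F th = Suc m" using hon_exists[OF a(1) hS] by blast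
  have thS: "th \<in> HS w F (Suc m)" using th hS by (simp add: HS_def)
  have Dlt: "Dm w F m < tlen th"
  proof -
    have "th \<noteq> [root F]" using th lab_root[OF a(1)] by (auto simp: tlab_def)
    then have "1 \<le> tlen th" using tine_len2[OF th(1)] by (simp add: tlen_def)
    moreover have "tlen u < tlen th" if "u \<in> HS w F m" for u
      using that F4[OF a(1), of u th] th hS by (auto simp: HS_def)
    ultimately show ?thesis using Dm_cases[OF a(1), of m] by auto
  qed
  have Dge: "tlen th \<le> Dm w F (Suc m)" using Dm_ge[OF a(1) thS] .
  have Aeq: "Am w (Suc m) l = Am w m l" for l using Am_Suc[OF a(2)] a(3) by simp
  have old: "rs w F (Suc m) t \<le> rs w F m t - 1" for t
    using Dlt Dge Aeq by (simp add: rs_def)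
  have newle: "rs w F (Suc m) t \<le> 0" if "is_tine F t" "tlab F t = Suc m" for t
  proof -
    have "t = th" using hon_unique[OF a(1) hS that(1) th(1)] that th by simp
    then show ?thesis using Dge that by (simp add: rs_def Am_zero)
  qed
  have newbt: "0 \<le> rs w F m (butlast t)" if "is_tine F t" "tlab F t = Suc m" for t
  proof -
    have "t = th" using hon_unique[OF a(1) hS that(1) th(1)] that th by simp
    moreover have "tlen (butlast t) + 1 = tlen t" using ext_lem[OF a(1) that] by simp
    ultimately show ?thesis using Dlt by (simp add: rs_def)
  qed
  have IH1: "\<And>t. is_tine F t \<Longrightarrow> tlab F t \<le> m \<Longrightarrow> rs w F m t \<le> rhoR (take m w)"
    using a(4) unfolding UB_def by blast
  have IH2: "\<And>k t1 t2. k \<le> m \<Longrightarrow> is_tine F t1 \<Longrightarrow> is_tine F t2 \<Longrightarrow> tlab F t1 \<le> m \<Longrightarrow> tlab F t2 \<le> m \<Longrightarrow>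
        disjoint_over F k t1 t2 \<Longrightarrow> min (rs w F m t1) (rs w F m t2) \<le> muR (take m w) k"
    using a(4) unfolding UB_def by blast
  define r where "r = rhoR (take m w)"
  have rr: "rhoR (take (Suc m) w) = rstep r False"
    using take_Suc_w[OF a(2)] a(3) by (simp add: rhoR_snoc r_def)
  have r0: "0 \<le> r" using rhoR_nonneg r_def by simp
  have P1: "rs w F (Suc m) t \<le> rhoR (take (Suc m) w)" if "is_tine F t" "tlab F t \<le> Suc m" for t
  proof (cases "tlab F t = Suc m")
    case True
    then show ?thesis using newle[OF that(1) True] rr r0 by (simp add: rstep_def)
  next
    case False
    then have "rs w F m t \<le> r" using IH1[OF that(1)] that(2) r_def by simp
    then show ?thesis using old[of t] rr r0 by (simp add: rstep_def)
  qed
  have mixed: "min (rs w F (Suc m) t1) (rs w F (Suc m) t2) \<le> mstep r (muR (take m w) k) False"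
    if k: "k \<le> m" and h: "is_tine F t1" "is_tine F t2" "tlab F t1 = Suc m" "tlab F t2 \<le> m"
       "disjoint_over F k t1 t2" for k t1 t2
  proof -
    define mu where "mu = muR (take m w) k"
    have e: "is_tine F (butlast t1) \<and> tlab F (butlast t1) \<le> m \<and> tine_edges (butlast t1) \<subseteq> tine_edges t1"
      using ext_lem[OF a(1) h(1,3)] by simp
    have "disjoint_over F k (butlast t1) t2" using h(5) e disj_mono by blast
    then have m1: "min (rs w F m (butlast t1)) (rs w F m t2) \<le> mu"
      using IH2[OF k] e h mu_def by blast
    have m2: "0 \<le> rs w F m (butlast t1)" using newbt[OF h(1,3)] .
    have m3: "rs w F m t2 \<le> r" using IH1[OF h(2,4)] r_def by simp
    have m4: "rs w F (Suc m) t1 \<le> 0" using newle[OF h(1,3)] .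
    have m5: "rs w F (Suc m) t2 \<le> rs w F m t2 - 1" using old .
    show ?thesis unfolding mu_def[symmetric] mstep_def using m1 m2 m3 m4 m5 by auto
  qed
  show ?thesis unfolding UB_def
  proof (intro conjI allI impI)
    fix t assume "is_tine F t \<and> tlab F t \<le> Suc m"
    then show "rs w F (Suc m) t \<le> rhoR (take (Suc m) w)" using P1 by simp
  next
    fix k t1 t2 assume k: "k \<le> Suc m" and h: "is_tine F t1 \<and> is_tine F t2 \<and> tlab F t1 \<le> Suc m \<and>
       tlab F t2 \<le> Suc m \<and> disjoint_over F k t1 t2"
    show "min (rs w F (Suc m) t1) (rs w F (Suc m) t2) \<le> muR (take (Suc m) w) k"
    proof (cases "k = Suc m")
      case True
      then show ?thesis using P1[of t1] h UB_top[OF a(2)] by simp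
    next
      case False
      then have k': "k \<le> m" using k by simp
      have mu': "muR (take (Suc m) w) k = mstep r (muR (take m w) k) False"
        using take_Suc_w[OF a(2)] a(3) muR_snoc[of k "take m w" "w ! m"] k' a(2) r_def by simp
      have mstep_ge: "muR (take m w) k - 1 \<le> mstep r (muR (take m w) k) False"
        by (simp add: mstep_def)
      show ?thesis
      proof (cases "tlab F t1 = Suc m")
        case c1: True
        show ?thesis
        proof (cases "tlab F t2 = Suc m")
          case True
          then have "t1 = t2" using hon_unique[OF a(1) hS] h c1 by blast
          moreover have "last t1 \<in> set t1 \<inter> set t2" using h tine_ne \<open>t1 = t2\<close> by auto
          ultimately have "lab F (last t1) \<le> k" using disj_vert[OF a(1)] h by blast
          then show ?thesis using c1 k' by (simp add: tlab_def)
        next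
          case False
          then show ?thesis using mixed[OF k'] h c1 mu' by force
        qed
      next
        case c1: False
        show ?thesis
        proof (cases "tlab F t2 = Suc m")
          case True
          have "disjoint_over F k t2 t1" using h disj_sym by blast
          then show ?thesis using mixed[OF k', of t2 t1] h c1 True mu' by (simp add: min.commute)
        next
          case False
          have "min (rs w F m t1) (rs w F m t2) \<le> muR (take m w) k"
            using IH2[OF k'] h c1 False by force
          then show ?thesis using old[of t1] old[of t2] mu' mstep_ge by linarith
        qed
      qed
    qed
  qed
qed

lemma UB_all: "is_fork w F \<Longrightarrow> m \<le> length w \<Longrightarrow> UB w F m"
proof (induction m)
  case 0 then show ?case using UB_0 by simp
next
  case (Suc m)
  then show ?case using UB_adv UB_hon by (cases "w ! m") auto
qed

lemma reach_le_rs: "is_fork w F \<Longrightarrow> is_tine F t \<Longrightarrow> reach w F t \<le> rs w F (length w) t"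
proof -
  assume a: "is_fork w F" "is_tine F t"
  have "reserve w F t = Am w (length w) (tlab F t)"
    unfolding reserve_def Am_def by (rule arg_cong[where f=card]) (auto simp: adv_idx_def)
  then show ?thesis using Dm_le_height[OF a(1), of "length w"]
    by (simp add: reach_def gap_def rs_def)
qed

lemma ub_reach: "is_fork w F \<Longrightarrow> is_tine F t \<Longrightarrow> reach w F t \<le> rhoR w"
  using UB_all[of w F "length w"] reach_le_rs[of w F t] tlab_le_len[of w F t]
  unfolding UB_def by fastforce

lemma ub_pair: "is_fork w F \<Longrightarrow> k \<le> length w \<Longrightarrow> is_tine F t1 \<Longrightarrow> is_tine F t2 \<Longrightarrow>
  disjoint_over F k t1 t2 \<Longrightarrow> min (reach w F t1) (reach w F t2) \<le> muR w k"
proof -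
  assume a: "is_fork w F" "k \<le> length w" "is_tine F t1" "is_tine F t2" "disjoint_over F k t1 t2"
  have "min (rs w F (length w) t1) (rs w F (length w) t2) \<le> muR (take (length w) w) k"
    using UB_all[of w F "length w"] a tlab_le_len[OF a(1)] unfolding UB_def by blast
  then show ?thesis using reach_le_rs[OF a(1,3)] reach_le_rs[OF a(1,4)] by simp
qed


lemma reach_img: "{reach w F t | t. is_tine F t} = reach w F ` {t. is_tine F t}" by auto

lemma rho_le: "is_fork w F \<Longrightarrow> rho w F \<le> rhoR w"
  unfolding rho_def reach_img using finite_tines[of w F] root_tine[of w F] ub_reach[of w F]
  by (subst Max_le_iff) auto

lemma rho_ge: "is_fork w F \<Longrightarrow> is_tine F t \<Longrightarrow> reach w F t \<le> rho w F"
  unfolding rho_def reach_img using finite_tines[of w F] by (intro Max_ge) auto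

lemma rho_eq: "is_fork w F \<Longrightarrow> is_tine F t \<Longrightarrow> rhoR w \<le> reach w F t \<Longrightarrow> rho w F = rhoR w"
  using rho_le rho_ge by (metis order_trans order_antisym)

lemma rho_nonneg: "is_fork w F \<Longrightarrow> 0 \<le> rho w F"
proof -
  assume a: "is_fork w F"
  obtain t where t: "is_tine F t" "tlen t = height F" using height_ex[OF a] by blast
  have "0 \<le> reach w F t" using t by (simp add: reach_def gap_def)
  then show ?thesis using rho_ge[OF a t(1)] by simp
qed

lemma rho_str_eq: "closed_fork w F \<Longrightarrow> rho w F = rhoR w \<Longrightarrow> rho_str w = rhoR w"
proof -
  assume a: "closed_fork w F" "rho w F = rhoR w"
  have fs: "{rho w F | F. closed_fork w F} \<subseteq> {0..rhoR w}"
    using rho_le rho_nonneg by (auto simp: closed_fork_def)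
  have fin: "finite {rho w F | F. closed_fork w F}" using fs finite_subset by blast
  have mem: "rhoR w \<in> {rho w F | F. closed_fork w F}" using a(1) a(2)[symmetric] by (simp only: mem_Collect_eq) blast
  show ?thesis unfolding rho_str_def
    by (rule Max_eqI[OF fin _ mem]) (use fs in auto)
qed

definition pairvals :: "bool list \<Rightarrow> nat \<Rightarrow> fork \<Rightarrow> int set" where
  "pairvals w k F = {min (reach w F t1) (reach w F t2) | t1 t2.
                   is_tine F t1 \<and> is_tine F t2 \<and> disjoint_over F k t1 t2}"

lemma pairvals_fin: "is_fork w F \<Longrightarrow> finite (pairvals w k F)"
proof -
  assume a: "is_fork w F"
  have "pairvals w k F \<subseteq> (\<lambda>p. min (reach w F (fst p)) (reach w F (snd p))) ` ({t. is_tine F t} \<times> {t. is_tine F t})"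
    unfolding pairvals_def by force
  moreover have "finite ({t. is_tine F t} \<times> {t. is_tine F t})" using finite_tines[OF a] by simp
  ultimately show ?thesis using finite_subset by blast
qed

lemma root_disj: "disjoint_over F k [r] [r]"
  by (simp add: disjoint_over_def tine_edges_def)

lemma pairvals_ne: "is_fork w F \<Longrightarrow> min (reach w F [root F]) (reach w F [root F]) \<in> pairvals w k F"
  unfolding pairvals_def using root_tine root_disj by blast

lemma mu_le: "is_fork w F \<Longrightarrow> k \<le> length w \<Longrightarrow> mu w k F \<le> muR w k"
proof -
  assume a: "is_fork w F" "k \<le> length w"
  have ne: "pairvals w k F \<noteq> {}" using pairvals_ne[OF a(1), of k] by blast
  have "\<forall>x \<in> pairvals w k F. x \<le> muR w k" using ub_pair[OF a] unfolding pairvals_def by blast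
  then show ?thesis unfolding mu_def pairvals_def[symmetric]
    using Max_le_iff[OF pairvals_fin[OF a(1)] ne] by blast
qed

lemma mu_ge: "is_fork w F \<Longrightarrow> is_tine F t1 \<Longrightarrow> is_tine F t2 \<Longrightarrow> disjoint_over F k t1 t2 \<Longrightarrow>
   min (reach w F t1) (reach w F t2) \<le> mu w k F"
  unfolding mu_def pairvals_def[symmetric] using pairvals_fin
  by (intro Max_ge) (auto simp: pairvals_def)

lemma mu_lb: "is_fork w F \<Longrightarrow> - int (length w) \<le> mu w k F"
proof -
  assume a: "is_fork w F"
  have "- int (length w) \<le> reach w F [root F]"
    using height_le[OF a] by (simp add: reach_def gap_def tlen_def)
  then show ?thesis using mu_ge[OF a root_tine[OF a] root_tine[OF a] root_disj[of F k "root F"]] by simp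
qed

lemma mu_eq: "is_fork w F \<Longrightarrow> k \<le> length w \<Longrightarrow> is_tine F t1 \<Longrightarrow> is_tine F t2 \<Longrightarrow>
   disjoint_over F k t1 t2 \<Longrightarrow> rhoR w \<le> reach w F t1 \<Longrightarrow> muR w k \<le> reach w F t2 \<Longrightarrow>
   reach w F t1 = rhoR w \<and> reach w F t2 = muR w k \<and> mu w k F = muR w k"
proof -
  assume a: "is_fork w F" "k \<le> length w" "is_tine F t1" "is_tine F t2"
   "disjoint_over F k t1 t2" "rhoR w \<le> reach w F t1" "muR w k \<le> reach w F t2"
  have r1: "reach w F t1 = rhoR w" using ub_reach[OF a(1,3)] a(6) by simp
  have r2u: "reach w F t2 \<le> rhoR w" using ub_reach[OF a(1,4)] .
  have p: "min (reach w F t1) (reach w F t2) \<le> muR w k" using ub_pair[OF a(1-5)] .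
  have ml: "muR w k \<le> rhoR w" using muR_le[OF a(2)] .
  have r2: "reach w F t2 = muR w k" using r1 r2u p ml a(7) by linarith
  have "mu w k F = muR w k" using mu_le[OF a(1,2)] mu_ge[OF a(1,3,4,5)] r1 r2 ml by simp
  then show ?thesis using r1 r2 by simp
qed

lemma mu_str_eq: "closed_fork w F \<Longrightarrow> k \<le> length w \<Longrightarrow> mu w k F = muR w k \<Longrightarrow> mu_str w k = muR w k"
proof -
  assume a: "closed_fork w F" "k \<le> length w" "mu w k F = muR w k"
  have fs: "{mu w k F | F. closed_fork w F} \<subseteq> {- int (length w)..muR w k}"
    using mu_le mu_lb a(2) by (auto simp: closed_fork_def)
  have fin: "finite {mu w k F | F. closed_fork w F}" using fs finite_subset by blast
  have mem: "muR w k \<in> {mu w k F | F. closed_fork w F}" using a(1) a(3)[symmetric] by (simp only: mem_Collect_eq) blast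
  show ?thesis unfolding mu_str_def
    by (rule Max_eqI[OF fin _ mem]) (use fs in auto)
qed

lemma res_fin: "finite {i. adv_idx w i \<and> l < i}"
  by (rule finite_subset[of _ "{..length w}"]) (auto simp: adv_idx_def)

lemma trunc: "is_fork w F \<Longrightarrow> is_tine F r \<Longrightarrow>
   \<exists>r'. honest_tine w F r' \<and> set r' \<subseteq> set r \<and> reach w F r \<le> reach w F r'"
proof (induction "length r" arbitrary: r rule: less_induct)
  case less
  show ?case
  proof (cases "honest_vertex w F (last r)")
    case True
    then show ?thesis using less.prems by (auto simp: honest_tine_def)
  next
    case False
    then have nr: "last r \<noteq> root F" by (auto simp: honest_vertex_def)
    then have "r \<noteq> [root F]" by auto
    then have l2: "2 \<le> length r" using tine_len2 less.prems(2) by blast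
    define l where "l = tlab F r"
    have lpos: "0 < l" using lab_nonroot[OF less.prems(1,2), of "last r"] nr tine_ne[OF less.prems(2)]
      by (simp add: l_def tlab_def)
    then obtain m where m: "l = Suc m" by (cases l) auto
    have e: "is_tine F (butlast r) \<and> tlab F (butlast r) \<le> m \<and> tlen (butlast r) + 1 = tlen r"
      using ext_lem[OF less.prems(1,2), of m] m l_def by simp
    have "\<not> honest_idx w l" using False by (simp add: honest_vertex_def l_def tlab_def)
    moreover have "l \<le> length w" using tlab_le_len[OF less.prems] l_def by simp
    ultimately have adv: "adv_idx w l" using lpos by (simp add: honest_idx_def adv_idx_def)
    have "insert l {i. adv_idx w i \<and> tlab F r < i} \<subseteq> {i. adv_idx w i \<and> tlab F (butlast r) < i}"
      using adv e m l_def by auto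
    then have "card (insert l {i. adv_idx w i \<and> tlab F r < i}) \<le> card {i. adv_idx w i \<and> tlab F (butlast r) < i}"
      using res_fin by (intro card_mono) auto
    then have "reserve w F r + 1 \<le> reserve w F (butlast r)"
      unfolding reserve_def using res_fin l_def by simp
    then have rr: "reach w F r \<le> reach w F (butlast r)" using e by (simp add: reach_def gap_def)
    have "length (butlast r) < length r" using l2 by simp
    then obtain r' where "honest_tine w F r'" "set r' \<subseteq> set (butlast r)" "reach w F (butlast r) \<le> reach w F r'"
      using less.hyps[of "butlast r"] less.prems(1) e by blast
    then show ?thesis using rr in_set_butlastD by fastforce
  qed
qed

definition Inv :: "bool list \<Rightarrow> fork \<Rightarrow> bool" where
  "Inv w F \<longleftrightarrow> closed_fork w F \<and> (\<exists>t. honest_tine w F t \<and> rhoR w \<le> reach w F t) \<and>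
    (\<forall>k < length w. \<exists>t1 t2. honest_tine w F t1 \<and> honest_tine w F t2 \<and> disjoint_over F k t1 t2 \<and>
        rhoR w \<le> reach w F t1 \<and> muR w k \<le> reach w F t2)"

lemma honest_idx_True: "honest_idx (w @ [True]) i = honest_idx w i"
  by (auto simp: honest_idx_def nth_append le_Suc_eq)

lemma adv_idx_True: "adv_idx (w @ [True]) i = (adv_idx w i \<or> i = Suc (length w))"
  by (auto simp: adv_idx_def nth_append le_Suc_eq)

lemma honest_idx_False: "honest_idx (w @ [False]) i = (honest_idx w i \<or> i = Suc (length w))"
  by (auto simp: honest_idx_def nth_append le_Suc_eq)

lemma adv_idx_False: "adv_idx (w @ [False]) i = adv_idx w i"
  by (auto simp: adv_idx_def nth_append le_Suc_eq)

lemma closed_True: "closed_fork w F \<Longrightarrow> closed_fork (w @ [True]) F"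
proof -
  assume a: "closed_fork w F"
  have hq: "honest_idx (w @ [True]) = honest_idx w" by (rule ext) (rule honest_idx_True)
  have hv: "honest_vertex (w @ [True]) F = honest_vertex w F" by (rule ext) (simp add: honest_vertex_def hq)
  have f: "is_fork w F" using a by (simp add: closed_fork_def)
  have "is_fork (w @ [True]) F" using f unfolding is_fork_def hq by (simp add: le_SucI)
  then show ?thesis using a unfolding closed_fork_def hv by simp
qed

lemma reach_True: "is_fork w F \<Longrightarrow> is_tine F t \<Longrightarrow> reach (w @ [True]) F t = reach w F t + 1"
proof -
  assume a: "is_fork w F" "is_tine F t"
  have "tlab F t < Suc (length w)" using tlab_le_len[OF a] by simp
  then have "{i. adv_idx (w @ [True]) i \<and> tlab F t < i} = insert (Suc (length w)) {i. adv_idx w i \<and> tlab F t < i}"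
    by (auto simp: adv_idx_True)
  moreover have "Suc (length w) \<notin> {i. adv_idx w i \<and> tlab F t < i}" by (simp add: adv_idx_def)
  ultimately have "reserve (w @ [True]) F t = reserve w F t + 1"
    unfolding reserve_def using res_fin by simp
  then show ?thesis by (simp add: reach_def gap_def)
qed

lemma honest_tine_True: "honest_tine (w @ [True]) F t = honest_tine w F t"
  by (simp add: honest_tine_def honest_vertex_def honest_idx_True)

lemma disj_all: "is_fork w F \<Longrightarrow> is_tine F a \<Longrightarrow> disjoint_over F (length w) a b"
proof -
  assume a: "is_fork w F" "is_tine F a"
  have "lab F v \<le> length w" if "v \<in> set a" for v
    using a that tine_set unfolding is_fork_def by blast
  then show ?thesis unfolding disjoint_over_def using edges_snd by blast
qed

lemma step_true: "Inv w F \<Longrightarrow> Inv (w @ [True]) F"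
proof -
  assume a: "Inv w F"
  have cf: "closed_fork w F" using a by (simp add: Inv_def)
  then have f: "is_fork w F" by (simp add: closed_fork_def)
  obtain tau where tau: "honest_tine w F tau" "rhoR w \<le> reach w F tau" using a by (auto simp: Inv_def)
  have tt: "is_tine F tau" using tau by (simp add: honest_tine_def)
  have rT: "rhoR (w @ [True]) = rhoR w + 1" by (simp add: rhoR_snoc rstep_def)
  have tau': "honest_tine (w @ [True]) F tau" using tau(1) honest_tine_True by simp
  have taur: "rhoR (w @ [True]) \<le> reach (w @ [True]) F tau" using rT reach_True[OF f tt] tau(2) by simp
  have P: "\<exists>t1 t2. honest_tine (w @ [True]) F t1 \<and> honest_tine (w @ [True]) F t2 \<and> disjoint_over F k t1 t2 \<and>
        rhoR (w @ [True]) \<le> reach (w @ [True]) F t1 \<and> muR (w @ [True]) k \<le> reach (w @ [True]) F t2"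
    if k: "k < length (w @ [True])" for k
  proof (cases "k = length w")
    case True
    have "muR (w @ [True]) k = rhoR w + 1" using True muR_snoc[of k w True] muR_len[of w]
      by (simp add: mstep_def)
    then have "muR (w @ [True]) k \<le> reach (w @ [True]) F tau" using taur rT by simp
    moreover have "disjoint_over F k tau tau" using disj_all[OF f tt, of tau] True by simp
    ultimately show ?thesis using tau' taur by blast
  next
    case False
    then have k': "k < length w" using k by simp
    then obtain t1 t2 where p: "honest_tine w F t1" "honest_tine w F t2" "disjoint_over F k t1 t2"
        "rhoR w \<le> reach w F t1" "muR w k \<le> reach w F t2" using a unfolding Inv_def by blast
    have mu: "muR (w @ [True]) k = muR w k + 1" using k' muR_snoc[of k w True] by (simp add: mstep_def)
    have r1: "reach (w @ [True]) F t1 = reach w F t1 + 1" using p(1) reach_True[OF f] by (simp add: honest_tine_def)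
    have r2: "reach (w @ [True]) F t2 = reach w F t2 + 1" using p(2) reach_True[OF f] by (simp add: honest_tine_def)
    have "honest_tine (w @ [True]) F t1" "honest_tine (w @ [True]) F t2" using p honest_tine_True by auto
    moreover have "rhoR (w @ [True]) \<le> reach (w @ [True]) F t1" using r1 rT p(4) by simp
    moreover have "muR (w @ [True]) k \<le> reach (w @ [True]) F t2" using r2 mu p(5) by simp
    ultimately show ?thesis using p(3) by blast
  qed
  show ?thesis unfolding Inv_def
  proof (intro conjI)
    show "closed_fork (w @ [True]) F" using closed_True[OF cf] .
    show "\<exists>t. honest_tine (w @ [True]) F t \<and> rhoR (w @ [True]) \<le> reach (w @ [True]) F t"
      using tau' taur by blast
    show "\<forall>k<length (w @ [True]). \<exists>t1 t2. honest_tine (w @ [True]) F t1 \<and> honest_tine (w @ [True]) F t2 \<and>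
        disjoint_over F k t1 t2 \<and> rhoR (w @ [True]) \<le> reach (w @ [True]) F t1 \<and>
        muR (w @ [True]) k \<le> reach (w @ [True]) F t2" using P by blast
  qed
qed

lemma triv_tine: "trivial_fork F \<Longrightarrow> is_tine F t \<Longrightarrow> t = [root F]"
proof (rule ccontr)
  assume a: "trivial_fork F" "is_tine F t" "t \<noteq> [root F]"
  then have "2 \<le> length t" using tine_len2 by blast
  then have "t ! 1 \<noteq> root F" using tine_nonroot[OF a(2), of 1] by simp
  moreover have "t ! 1 \<in> verts F" using tine_set[OF a(2)] \<open>2 \<le> length t\<close> by (simp add: subset_iff)
  ultimately show False using a(1) by (simp add: trivial_fork_def)
qed

lemma triv_root_tine: "trivial_fork F \<Longrightarrow> is_tine F [root F]"
  by (simp add: is_tine_def trivial_fork_def)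

lemma Inv_triv: "trivial_fork F \<Longrightarrow> Inv [] F"
proof -
  assume a: "trivial_fork F"
  have tines: "{t. is_tine F t} = {[root F]}" using triv_tine[OF a] triv_root_tine[OF a] by blast
  have f: "is_fork [] F" unfolding is_fork_def
  proof (intro conjI ballI allI impI)
    show "finite (verts F)" using a by (simp add: trivial_fork_def)
    show "root F \<in> verts F" using a by (simp add: trivial_fork_def)
  next
    fix v assume "v \<in> verts F"
    then show "\<exists>t. is_tine F t \<and> last t = v" using a triv_root_tine[OF a]
      by (rule_tac x="[root F]" in exI) (simp add: trivial_fork_def)
  next
    fix v assume "v \<in> verts F"
    then show "lab F v \<le> length []" using a by (simp add: trivial_fork_def)
  next
    show "lab F (root F) = 0" using a by (simp add: trivial_fork_def)
  next
    fix t assume "is_tine F t"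
    then have "t = [root F]" using triv_tine[OF a] by blast
    then show "sorted_wrt (<) (map (lab F) t)" by simp
  next
    fix i assume "honest_idx [] i" then show "card {v \<in> verts F. lab F v = i} = 1" by (simp add: honest_idx_def)
  next
    fix t1 t2 assume "is_tine F t1" "is_tine F t2" "honest_idx [] (tlab F t1)"
      "honest_idx [] (tlab F t2)" "tlab F t1 < tlab F t2"
    then show "tlen t1 < tlen t2"
      by (simp add: honest_idx_def)
  qed
  have "honest_vertex [] F v" if "is_leaf F v" for v
  proof -
    have "v \<in> verts F" using that by (simp add: is_leaf_def)
    then have "v = root F" using a by (simp add: trivial_fork_def)
    then show ?thesis by (simp add: honest_vertex_def)
  qed
  then have cf: "closed_fork [] F" unfolding closed_fork_def using f by blast
  have h: "height F = 0" unfolding height_def tines by (simp add: tlen_def)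
  have "{i. adv_idx [] i \<and> tlab F [root F] < i} = {}" by (simp add: adv_idx_def)
  then have "reserve [] F [root F] = 0" unfolding reserve_def by (simp only: card.empty)
  then have "reach [] F [root F] = 0" using h by (simp add: reach_def gap_def tlen_def)
  moreover have "honest_tine [] F [root F]" using triv_root_tine[OF a]
    by (simp add: honest_tine_def honest_vertex_def)
  ultimately show ?thesis unfolding Inv_def using cf by force
qed



locale cext =
  fixes w :: "bool list" and F F' :: fork and s new :: "nat list"
  assumes cf: "closed_fork w F" and st: "is_tine F s"
    and cf': "closed_fork (w @ [False]) F'" and sub: "subfork F F'"
    and nne: "new \<noteq> []" and ndis: "set new \<inter> verts F = {}"
    and vF': "verts F' = verts F \<union> set new"
    and sig: "is_tine F' (s @ new)" and slab: "lab F' (last new) = Suc (length w)"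
    and slen: "tlen (s @ new) = height F + 1"
begin

lemma f: "is_fork w F" using cf by (simp add: closed_fork_def)
lemma f': "is_fork (w @ [False]) F'" using cf' by (simp add: closed_fork_def)

lemma old_tine: "is_tine F t \<Longrightarrow> is_tine F' t"
proof -
  assume t: "is_tine F t"
  have r: "root F' = root F" using sub by (simp add: subfork_def)
  have p: "par F' v = par F v" if "v \<in> verts F" "v \<noteq> root F" for v using sub that by (simp add: subfork_def)
  have vs: "verts F \<subseteq> verts F'" using sub by (simp add: subfork_def)
  show ?thesis unfolding is_tine_def
  proof (intro conjI allI impI)
    show "t \<noteq> []" using t by (simp add: is_tine_def)
    show "hd t = root F'" using t r by (simp add: is_tine_def)
    show "set t \<subseteq> verts F'" using t vs by (auto simp: is_tine_def)
  next
    fix i assume i: "Suc i < length t"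
    then have "t ! Suc i \<noteq> root F" "par F (t ! Suc i) = t ! i" using t by (auto simp: is_tine_def)
    moreover have "t ! Suc i \<in> verts F" using t i by (auto simp: is_tine_def)
    ultimately show "t ! Suc i \<noteq> root F'" "par F' (t ! Suc i) = t ! i" using r p by auto
  qed
qed

lemma labeq: "v \<in> verts F \<Longrightarrow> lab F' v = lab F v" using sub by (simp add: subfork_def)

lemma tine_old_last: "is_tine F' t \<Longrightarrow> last t \<in> verts F \<Longrightarrow> is_tine F t"
proof -
  assume a: "is_tine F' t" "last t \<in> verts F"
  obtain u where u: "is_tine F u" "last u = last t" using f a(2) unfolding is_fork_def by blast
  then have "u = t" using old_tine[OF u(1)] a(1) tine_unique by blast
  then show ?thesis using u by simp
qed

lemma tlen_le: "is_tine F' t \<Longrightarrow> tlen t \<le> height F + 1"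
proof (cases "last t \<in> verts F")
  case True
  assume "is_tine F' t"
  then show ?thesis using tine_old_last True height_ge[OF f] by fastforce
next
  case False
  assume t: "is_tine F' t"
  then have "last t \<in> set new" using vF' tine_set tine_ne last_in_set False by blast
  then have "last t \<in> set (s @ new)" by simp
  then obtain i where i: "i < length (s @ new)" "(s @ new) ! i = last t" by (meson in_set_conv_nth)
  have "take (Suc i) (s @ new) = t" using tine_prefix_at[OF sig i(1)] i t tine_unique by metis
  then have "tlen t \<le> tlen (s @ new)" by (auto simp: tlen_def)
  then show ?thesis using slen by simp
qed

lemma height': "height F' = height F + 1"
proof -
  obtain t where "is_tine F' t" "tlen t = height F'" using height_ex[OF f'] by blast
  then have "height F' \<le> height F + 1" using tlen_le by metis
  moreover have "height F + 1 \<le> height F'" using height_ge[OF f' sig] slen by simp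
  ultimately show ?thesis by simp
qed

lemma tlab_old: "is_tine F t \<Longrightarrow> tlab F' t = tlab F t"
  using labeq tine_set tine_ne last_in_set by (metis subsetD tlab_def)

lemma reach_old: "is_tine F t \<Longrightarrow> reach (w @ [False]) F' t = reach w F t - 1"
proof -
  assume t: "is_tine F t"
  have "reserve (w @ [False]) F' t = reserve w F t"
    unfolding reserve_def using tlab_old[OF t] by (simp add: adv_idx_False)
  moreover have "tlen t \<le> height F" using height_ge[OF f t] .
  ultimately show ?thesis by (simp add: reach_def gap_def height')
qed

lemma reach_sig: "reach (w @ [False]) F' (s @ new) = 0"
proof -
  have "tlab F' (s @ new) = Suc (length w)" using slab nne by (simp add: tlab_def)
  then have "{i. adv_idx (w @ [False]) i \<and> tlab F' (s @ new) < i} = {}" by (auto simp: adv_idx_def)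
  then have "reserve (w @ [False]) F' (s @ new) = 0" unfolding reserve_def by (simp only: card.empty)
  then show ?thesis by (simp add: reach_def gap_def height' slen)
qed

lemma honest_old: "honest_tine w F t \<Longrightarrow> honest_tine (w @ [False]) F' t"
proof -
  assume a: "honest_tine w F t"
  then have t: "is_tine F t" by (simp add: honest_tine_def)
  have "root F' = root F" using sub by (simp add: subfork_def)
  moreover have "lab F' (last t) = lab F (last t)" using tlab_old[OF t] by (simp add: tlab_def)
  ultimately show ?thesis using a old_tine[OF t]
    by (auto simp: honest_tine_def honest_vertex_def honest_idx_False)
qed

lemma honest_sig: "honest_tine (w @ [False]) F' (s @ new)"
  using sig slab nne by (simp add: honest_tine_def honest_vertex_def honest_idx_False)

lemma disj_old: "is_tine F a \<Longrightarrow> is_tine F b \<Longrightarrow> disjoint_over F k a b \<Longrightarrow> disjoint_over F' k a b"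
proof -
  assume a: "is_tine F a" "is_tine F b" "disjoint_over F k a b"
  then have "\<forall>v \<in> set a \<inter> set b. lab F v \<le> k" using disj_vert[OF f] by blast
  then have "\<forall>v \<in> set a \<inter> set b. lab F' v \<le> k" using labeq tine_set[OF a(1)] by auto
  then show ?thesis by (rule disj_weak)
qed

lemma disj_sig: "is_tine F x \<Longrightarrow> \<forall>v \<in> set s \<inter> set x. lab F v \<le> k \<Longrightarrow> disjoint_over F' k (s @ new) x"
proof -
  assume a: "is_tine F x" "\<forall>v \<in> set s \<inter> set x. lab F v \<le> k"
  have "\<forall>v \<in> set (s @ new) \<inter> set x. lab F' v \<le> k"
  proof
    fix v assume v: "v \<in> set (s @ new) \<inter> set x"
    then have vF: "v \<in> verts F" using tine_set[OF a(1)] by auto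
    then have "v \<notin> set new" using ndis by auto
    then have "v \<in> set s" using v by auto
    then show "lab F' v \<le> k" using a(2) v vF labeq by auto
  qed
  then show ?thesis by (rule disj_weak)
qed

lemma disj_all': "is_tine F a \<Longrightarrow> is_tine F b \<Longrightarrow> disjoint_over F' (length w) a b"
proof -
  assume a: "is_tine F a" "is_tine F b"
  have "\<forall>v \<in> set a \<inter> set b. lab F' v \<le> length w"
    using labeq tine_set[OF a(1)] f unfolding is_fork_def by auto
  then show ?thesis by (rule disj_weak)
qed

lemma disj_sig_all: "is_tine F x \<Longrightarrow> disjoint_over F' (length w) (s @ new) x"
proof -
  assume a: "is_tine F x"
  have "\<forall>v \<in> set (s @ new) \<inter> set x. lab F' v \<le> length w"
    using labeq tine_set[OF a] f unfolding is_fork_def by auto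
  then show ?thesis by (rule disj_weak)
qed

end


lemma divg_fin: "is_fork w F \<Longrightarrow>
  finite {lab F (last (longest_common_prefix x r)) | r. is_tine F r \<and> reach w F r = rho w F}"
proof -
  assume a: "is_fork w F"
  have "{lab F (last (longest_common_prefix x r)) | r. is_tine F r \<and> reach w F r = rho w F}
     \<subseteq> (\<lambda>r. lab F (last (longest_common_prefix x r))) ` {t. is_tine F t}" by auto
  then show ?thesis using finite_tines[OF a] finite_subset by blast
qed

lemma step_false: "Inv w F \<Longrightarrow> astar_choice w F s \<Longrightarrow> cons_ext w F s F' \<Longrightarrow> Inv (w @ [False]) F'"
proof -
  assume inv: "Inv w F" and ch: "astar_choice w F s" and ce: "cons_ext w F s F'"
  obtain new where nw: "new \<noteq> []" "distinct new" "set new \<inter> verts F = {}"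
        "verts F' = verts F \<union> set new" "is_tine F' (s @ new)" "lab F' (last new) = length w + 1"
        "tlen (s @ new) = height F + 1"
    using ce unfolding cons_ext_def by blast
  interpret C: cext w F F' s new
    using ce nw unfolding cons_ext_def by unfold_locales auto
  have f: "is_fork w F" by (rule C.f)
  have f': "is_fork (w @ [False]) F'" by (rule C.f')
  define R where "R = rhoR w"
  have R0: "0 \<le> R" using rhoR_nonneg R_def by simp
  have rF: "rhoR (w @ [False]) = rstep R False" by (simp add: rhoR_snoc R_def)
  obtain tau where tau: "honest_tine w F tau" "R \<le> reach w F tau" using inv R_def by (auto simp: Inv_def)
  have tt: "is_tine F tau" using tau by (simp add: honest_tine_def)
  define sg where "sg = s @ new"
  have sgh: "honest_tine (w @ [False]) F' sg" "reach (w @ [False]) F' sg = 0"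
    using C.honest_sig C.reach_sig sg_def by auto
  have P0: "\<exists>t. honest_tine (w @ [False]) F' t \<and> rhoR (w @ [False]) \<le> reach (w @ [False]) F' t"
  proof (cases "0 < R")
    case True
    then show ?thesis using C.honest_old[OF tau(1)] C.reach_old[OF tt] tau(2) rF
      by (intro exI[of _ tau]) (simp add: rstep_def)
  next
    case False
    then show ?thesis using sgh rF by (intro exI[of _ sg]) (simp add: rstep_def)
  qed
  have P: "\<exists>t1 t2. honest_tine (w @ [False]) F' t1 \<and> honest_tine (w @ [False]) F' t2 \<and> disjoint_over F' k t1 t2 \<and>
        rhoR (w @ [False]) \<le> reach (w @ [False]) F' t1 \<and> muR (w @ [False]) k \<le> reach (w @ [False]) F' t2"
    if k: "k < length (w @ [False])" for k
  proof (cases "k = length w")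
    case True
    have mu': "muR (w @ [False]) k = R - 1" using True muR_snoc[of k w False] muR_len[of w] R_def
      by (simp add: mstep_def)
    show ?thesis
    proof (cases "0 < R")
      case True
      have "disjoint_over F' k tau tau" using C.disj_all'[OF tt tt] \<open>k = length w\<close> by simp
      then show ?thesis using C.honest_old[OF tau(1)] C.reach_old[OF tt] tau(2) rF mu' True
        by (intro exI[of _ tau]) (simp add: rstep_def)
    next
      case False
      have "disjoint_over F' k sg tau" using C.disj_sig_all[OF tt] \<open>k = length w\<close> sg_def by simp
      then show ?thesis using C.honest_old[OF tau(1)] C.reach_old[OF tt] tau(2) rF mu' False sgh
        by (intro exI[of _ sg] exI[of _ tau]) (simp add: rstep_def)
    qed
  next
    case False
    then have k': "k < length w" using k by simp
    then obtain t1 t2 where p: "honest_tine w F t1" "honest_tine w F t2" "disjoint_over F k t1 t2"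
        "R \<le> reach w F t1" "muR w k \<le> reach w F t2" using inv R_def unfolding Inv_def by blast
    have t1: "is_tine F t1" and t2: "is_tine F t2" using p by (auto simp: honest_tine_def)
    define mu where "mu = muR w k"
    have muF: "muR (w @ [False]) k = mstep R mu False" using k' muR_snoc[of k w False] R_def mu_def by simp
    have mR: "mu \<le> R" using muR_le[of k w] k' mu_def R_def by simp
    show ?thesis
    proof (cases "mu < R \<and> mu = 0")
      case True
      have ex: "reach w F t1 = R \<and> reach w F t2 = mu"
        using mu_eq[OF f _ t1 t2 p(3)] k' p(4,5) R_def mu_def by simp
      have rho: "rho w F = R" using rho_eq[OF f t1] p(4) R_def by simp
      have z: "\<exists>t. is_tine F t \<and> reach w F t = 0" using t2 ex True by blast
      then have sz: "\<forall>t. is_tine F t \<and> reach w F t = 0 \<longrightarrow> divg w F s \<le> divg w F t"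
        using ch unfolding astar_choice_def by simp
      define D where "D x = {lab F (last (longest_common_prefix x r)) | r. is_tine F r \<and> reach w F r = rho w F}" for x
      have dd: "divg w F x = Min (D x)" for x by (simp add: divg_def D_def)
      have t1D: "lab F (last (longest_common_prefix t2 t1)) \<in> D t2" using t1 ex rho D_def by auto
      have "divg w F t2 \<le> lab F (last (longest_common_prefix t2 t1))"
        using dd Min_le[OF divg_fin[OF f] t1D[unfolded D_def]] D_def by simp
      moreover have "lab F (last (longest_common_prefix t2 t1)) \<le> k"
        using disj_vert[OF f t2 t1] lcp_vert[OF f t2 t1] p(3) disj_sym by blast
      ultimately have dk: "divg w F s \<le> k" using sz t2 ex True by force
      have "D s \<noteq> {}" using t1 ex rho D_def by auto
      then have "divg w F s \<in> D s" using dd Min_in[OF divg_fin[OF f]] D_def by metis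
      then obtain r where r: "is_tine F r" "reach w F r = R" "lab F (last (longest_common_prefix s r)) \<le> k"
        using dk rho D_def by auto
      have sv: "\<forall>v \<in> set s \<inter> set r. lab F v \<le> k" using lcp_vert[OF f C.st r(1)] r(3) by blast
      obtain r' where r': "honest_tine w F r'" "set r' \<subseteq> set r" "reach w F r \<le> reach w F r'"
        using trunc[OF f r(1)] by blast
      have r't: "is_tine F r'" using r' by (simp add: honest_tine_def)
      have "\<forall>v \<in> set s \<inter> set r'. lab F v \<le> k" using sv r'(2) by auto
      then have "disjoint_over F' k r' sg" using C.disj_sig[OF r't] sg_def disj_sym by blast
      moreover have "rhoR (w @ [False]) \<le> reach (w @ [False]) F' r'"
        using C.reach_old[OF r't] r'(3) r(2) rF True by (simp add: rstep_def)
      moreover have "muR (w @ [False]) k \<le> reach (w @ [False]) F' sg" using sgh muF True by (simp add: mstep_def)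
      ultimately show ?thesis using C.honest_old[OF r'(1)] sgh by blast
    next
      case False
      have muF': "muR (w @ [False]) k = mu - 1" using muF False by (simp add: mstep_def)
      show ?thesis
      proof (cases "0 < R")
        case True
        have "disjoint_over F' k t1 t2" using C.disj_old[OF t1 t2 p(3)] .
        moreover have "rhoR (w @ [False]) \<le> reach (w @ [False]) F' t1"
          using C.reach_old[OF t1] p(4) rF True R_def by (simp add: rstep_def)
        moreover have "muR (w @ [False]) k \<le> reach (w @ [False]) F' t2"
          using C.reach_old[OF t2] p(5) muF' mu_def by simp
        ultimately show ?thesis using C.honest_old[OF p(1)] C.honest_old[OF p(2)] by blast
      next
        case False
        then have R00: "R = 0" using R0 by simp
        have r0': "rhoR (w @ [False]) = 0" using rF R00 by (simp add: rstep_def)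
        have "\<forall>v \<in> set t1 \<inter> set t2. lab F v \<le> k" using disj_vert[OF f t1 t2] p(3) by blast
        then have "(\<forall>v \<in> set s \<inter> set t1. lab F v \<le> k) \<or> (\<forall>v \<in> set s \<inter> set t2. lab F v \<le> k)"
          using ultra[OF f C.st t1 t2] by blast
        then show ?thesis
        proof
          assume "\<forall>v \<in> set s \<inter> set t1. lab F v \<le> k"
          then have "disjoint_over F' k sg t1" using C.disj_sig[OF t1] sg_def by blast
          moreover have "muR (w @ [False]) k \<le> reach (w @ [False]) F' t1"
            using C.reach_old[OF t1] p(4) muF' mR R00 R_def by simp
          ultimately show ?thesis using C.honest_old[OF p(1)] sgh r0' by (intro exI[of _ sg] exI[of _ t1]) simp
        next
          assume "\<forall>v \<in> set s \<inter> set t2. lab F v \<le> k"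
          then have "disjoint_over F' k sg t2" using C.disj_sig[OF t2] sg_def by blast
          moreover have "muR (w @ [False]) k \<le> reach (w @ [False]) F' t2"
            using C.reach_old[OF t2] p(5) muF' mu_def by simp
          ultimately show ?thesis using C.honest_old[OF p(2)] sgh r0' by (intro exI[of _ sg] exI[of _ t2]) simp
        qed
      qed
    qed
  qed
  show ?thesis unfolding Inv_def
  proof (intro conjI)
    show "closed_fork (w @ [False]) F'" using C.cf' .
    show "\<exists>t. honest_tine (w @ [False]) F' t \<and> rhoR (w @ [False]) \<le> reach (w @ [False]) F' t" using P0 .
    show "\<forall>k<length (w @ [False]). \<exists>t1 t2. honest_tine (w @ [False]) F' t1 \<and> honest_tine (w @ [False]) F' t2 \<and>
        disjoint_over F' k t1 t2 \<and> rhoR (w @ [False]) \<le> reach (w @ [False]) F' t1 \<and>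
        muR (w @ [False]) k \<le> reach (w @ [False]) F' t2" using P by blast
  qed
qed


lemma Inv_step: "Inv w F \<Longrightarrow> astar_step w b F F' \<Longrightarrow> Inv (w @ [b]) F'"
proof (cases b)
  case True
  assume "Inv w F" "astar_step w b F F'"
  then show ?thesis using True step_true by (simp add: astar_step_def)
next
  case False
  assume a: "Inv w F" "astar_step w b F F'"
  then obtain s where "astar_choice w F s" "cons_ext w F s F'" using False by (auto simp: astar_step_def)
  then show ?thesis using step_false a(1) False by simp
qed

lemma Inv_run: "astar_run w F \<Longrightarrow> Inv w F"
proof (induction rule: astar_run.induct)
  case (init F) then show ?case by (rule Inv_triv)
next
  case (step w F b Fx) then show ?case using Inv_step by blast
qed

theorem theorem5:
  fixes w :: "bool list" and b :: bool and F F' :: fork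
  assumes "astar_run w F"
    and "astar_step w b F F'"
    and "canonical w F"
  shows "canonical (w @ [b]) F'"
proof -
  have inv: "Inv (w @ [b]) F'" using Inv_step[OF Inv_run[OF assms(1)] assms(2)] .
  have cf: "closed_fork (w @ [b]) F'" using inv by (simp add: Inv_def)
  then have f: "is_fork (w @ [b]) F'" by (simp add: closed_fork_def)
  have sub: "subfork F F'"
  proof (cases b)
    case True
    then have "F' = F" using assms(2) by (simp add: astar_step_def)
    then show ?thesis by (simp add: subfork_def)
  next
    case False
    then obtain s where "cons_ext w F s F'" using assms(2) by (auto simp: astar_step_def)
    then show ?thesis by (simp add: cons_ext_def)
  qed
  obtain tau where tau: "honest_tine (w @ [b]) F' tau" "rhoR (w @ [b]) \<le> reach (w @ [b]) F' tau"
    using inv by (auto simp: Inv_def)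
  have tt: "is_tine F' tau" using tau by (simp add: honest_tine_def)
  have rho: "rho (w @ [b]) F' = rhoR (w @ [b])" using rho_eq[OF f tt tau(2)] .
  have rtau: "reach (w @ [b]) F' tau = rho (w @ [b]) F'" using ub_reach[OF f tt] tau(2) rho by simp
  have rs: "rho_str (w @ [b]) = rhoR (w @ [b])" using rho_str_eq[OF cf rho] .
  have R: "\<exists>t. honest_tine (w @ [b]) F' t \<and> reach (w @ [b]) F' t = rho (w @ [b]) F' \<and>
       rho (w @ [b]) F' = rho_str (w @ [b])" using tau(1) rtau rho rs by (intro exI[of _ tau]) simp
  have M: "\<forall>k < length (w @ [b]). \<exists>t1 t2.
              honest_tine (w @ [b]) F' t1 \<and> honest_tine (w @ [b]) F' t2 \<and>
              witnesses_mu (w @ [b]) k F' t1 t2 \<and>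
              mu (w @ [b]) k F' = mu_str (w @ [b]) k"
  proof (intro allI impI)
    fix k assume k: "k < length (w @ [b])"
    have kle: "k \<le> length (w @ [b])" using k by simp
    have allk: "\<forall>k<length (w @ [b]). \<exists>t1 t2. honest_tine (w @ [b]) F' t1 \<and> honest_tine (w @ [b]) F' t2 \<and>
        disjoint_over F' k t1 t2 \<and> rhoR (w @ [b]) \<le> reach (w @ [b]) F' t1 \<and>
        muR (w @ [b]) k \<le> reach (w @ [b]) F' t2" using inv unfolding Inv_def by (elim conjE)
    obtain t1 t2 where p: "honest_tine (w @ [b]) F' t1" "honest_tine (w @ [b]) F' t2"
       "disjoint_over F' k t1 t2" "rhoR (w @ [b]) \<le> reach (w @ [b]) F' t1"
       "muR (w @ [b]) k \<le> reach (w @ [b]) F' t2" using allk k by blast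
    have t1: "is_tine F' t1" and t2: "is_tine F' t2" using p by (auto simp: honest_tine_def)
    have e: "reach (w @ [b]) F' t1 = rhoR (w @ [b]) \<and> reach (w @ [b]) F' t2 = muR (w @ [b]) k \<and>
       mu (w @ [b]) k F' = muR (w @ [b]) k"
      by (rule mu_eq[OF f kle t1 t2 p(3) p(4) p(5)])
    have ms: "mu_str (w @ [b]) k = muR (w @ [b]) k" using mu_str_eq[OF cf kle] e by blast
    have w1: "reach (w @ [b]) F' t1 = rho (w @ [b]) F'" using e rho by simp
    have w2: "reach (w @ [b]) F' t2 = mu (w @ [b]) k F'" using e by simp
    have wit: "witnesses_mu (w @ [b]) k F' t1 t2" unfolding witnesses_mu_def
      using t1 t2 p(3) w1 w2 by blast
    have mm: "mu (w @ [b]) k F' = mu_str (w @ [b]) k" using e ms by simp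
    show "\<exists>t1 t2. honest_tine (w @ [b]) F' t1 \<and> honest_tine (w @ [b]) F' t2 \<and>
              witnesses_mu (w @ [b]) k F' t1 t2 \<and> mu (w @ [b]) k F' = mu_str (w @ [b]) k"
      using p(1) p(2) wit mm by blast
  qed
  show ?thesis by (rule canonical.step[OF assms(3) cf sub R M])
qed

end
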